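(* Suppose $0<q<1$ and let $(r_m/s_m)_{m\in\mathbb N}$ be a convergent sequence of rational numbers. (1) If $r_m/s_m$ converges to an irrational number $t$, then the sequence $([r_m/s_m]^\sharp_q)_m$ converges to a limit which depends only on $t$. (2) If $r_m/s_m$ converges to a rational number $r/s$ from the right, then $[r_m/s_m]^\sharp_q\to[r/s]^\sharp_q$. (3) If $r_m/s_m$ converges to a rational number $r/s$ from the left, then $[r_m/s_m]^\sharp_q\to[r/s]^\flat_q$.
   Context: Let $\sigma_{1,q}=\begin{bmatrix}q^{-1}&-q^{-1}\\0&1\end{bmatrix}$ and $\sigma_{2,q}=\begin{bmatrix}1&0\\1&q^{-1}\end{bmatrix}$ in $\mathrm{PSL}_2(\mathbb R)$, acting on $\mathbb R\cup\{\infty\}$ by fractional linear transformations $\begin{bmatrix}a&b\\c&d\end{bmatrix}z=\frac{az+b}{cz+d}$; $\sigma_i\mapsto\sigma_{i,q}$ defines a homomorphism from the braid group $B_3=\langle\sigma_1,\sigma_2\mid\sigma_1\sigma_2\sigma_1=\sigma_2\sigma_1\sigma_2\rangle$. Every nonzero finite rational $r/s$ has a unique expansion $r/s=[a_1,\dots,a_{2n}]=a_1+\cfrac{1}{a_2+\cfrac{1}{\ddots+\cfrac1{a_{2n}}}}$ with either $a_1\ge0$, $a_2,\dots,a_{2n}\ge1$, or $a_1\le0$, $a_2,\dots,a_{2n}\le-1$ (integers); $0$ has expansion $[-1,1]$ and $\infty$ the empty expansion. For such $\mathbf a$ let $\beta_{\mathbf a}=\sigma_1^{-a_1}\sigma_2^{a_2}\cdots\sigma_1^{-a_{2n-1}}\sigma_2^{a_{2n}}$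 and $\beta_{\mathbf a,q}$ its image in $\mathrm{PSL}_2(\mathbb R)$. The right $q$-deformed rational is $[r/s]^\sharp_q=\beta_{\mathbf a,q}(\infty)$ and the left $q$-deformed rational is $[r/s]^\flat_q=\beta_{\mathbf a,q}(1/(1-q))$. *)

theory Defs
  imports Complex_Main
begin

fun cf_eval :: "int list \<Rightarrow> rat" where
  "cf_eval [] = 0"
| "cf_eval [a] = of_int a"
| "cf_eval (a # as) = of_int a + 1 / cf_eval as"

definition cf_valid :: "int list \<Rightarrow> bool" where
  "cf_valid as \<longleftrightarrow> as \<noteq> [] \<and> even (length as) \<and>
     ((hd as \<ge> 0 \<and> (\<forall>b\<in>set (tl as). b \<ge> 1)) \<or>
      (hd as \<le> 0 \<and> (\<forall>b\<in>set (tl as). b \<le> -1)))"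

definition cf_expansion :: "rat \<Rightarrow> int list" where
  "cf_expansion x = (if x = 0 then [-1, 1] else (THE as. cf_valid as \<and> cf_eval as = x))"

type_synonym mat2 = "real \<times> real \<times> real \<times> real"  \<comment> \<open>(a,b,c,d) = [[a,b],[c,d]]\<close>

definition mat2_mult :: "mat2 \<Rightarrow> mat2 \<Rightarrow> mat2" where
  "mat2_mult M N = (case M of (a,b,c,d) \<Rightarrow> case N of (e,f,g,h) \<Rightarrow>
      (a*e + b*g, a*f + b*h, c*e + d*g, c*f + d*h))"

definition mat2_id :: mat2 where "mat2_id = (1,0,0,1)"

text \<open>Adjugate: a scalar multiple of the inverse, hence the inverse in PGL_2 / PSL_2.\<close>
definition mat2_adj :: "mat2 \<Rightarrow> mat2" where
  "mat2_adj M = (case M of (a,b,c,d) \<Rightarrow> (d, -b, -c, a))"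

fun mat2_npow :: "mat2 \<Rightarrow> nat \<Rightarrow> mat2" where
  "mat2_npow M 0 = mat2_id"
| "mat2_npow M (Suc n) = mat2_mult M (mat2_npow M n)"

definition mat2_ipow :: "mat2 \<Rightarrow> int \<Rightarrow> mat2" where
  "mat2_ipow M k = (if k \<ge> 0 then mat2_npow M (nat k) else mat2_npow (mat2_adj M) (nat (-k)))"

definition sigma1 :: "real \<Rightarrow> mat2" where
  "sigma1 q = (1/q, -1/q, 0, 1)"

definition sigma2 :: "real \<Rightarrow> mat2" where
  "sigma2 q = (1, 0, 1, 1/q)"

fun beta :: "real \<Rightarrow> int list \<Rightarrow> mat2" where
  "beta q (a1 # a2 # rest) =
     mat2_mult (mat2_ipow (sigma1 q) (-a1)) (mat2_mult (mat2_ipow (sigma2 q) a2) (beta q rest))"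
| "beta q _ = mat2_id"

definition mat2_act_hom :: "mat2 \<Rightarrow> real \<Rightarrow> real \<Rightarrow> real" where
  "mat2_act_hom M x y = (case M of (a,b,c,d) \<Rightarrow> (a*x + b*y) / (c*x + d*y))"

text \<open>Right q-deformed rational: beta_{a,q}(\<infinity>), \<infinity> = (1 : 0).\<close>
definition qrat_sharp :: "real \<Rightarrow> rat \<Rightarrow> real" where
  "qrat_sharp q x = mat2_act_hom (beta q (cf_expansion x)) 1 0"

text \<open>Left q-deformed rational: beta_{a,q}(1/(1-q)), 1/(1-q) = (1 : 1-q).\<close>
definition qrat_flat :: "real \<Rightarrow> rat \<Rightarrow> real" where
  "qrat_flat q x = mat2_act_hom (beta q (cf_expansion x)) 1 (1 - q)"

end

theory Submission
  imports Defs
begin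


definition app :: "mat2 \<Rightarrow> real \<times> real \<Rightarrow> real \<times> real" where
  "app M v = (case M of (a,b,c,d) \<Rightarrow> case v of (x,y) \<Rightarrow> (a*x+b*y, c*x+d*y))"

lemma app_mult: "app (mat2_mult M N) v = app M (app N v)"
  by (cases M; cases N; cases v) (simp add: app_def mat2_mult_def algebra_simps)

lemma app_id[simp]: "app mat2_id v = v"
  by (cases v) (simp add: app_def mat2_id_def)

lemma mult_assoc: "mat2_mult (mat2_mult M N) P = mat2_mult M (mat2_mult N P)"
  by (cases M; cases N; cases P) (simp add: mat2_mult_def algebra_simps)

lemma mult_id_left[simp]: "mat2_mult mat2_id M = M"
  by (cases M) (simp add: mat2_mult_def mat2_id_def)
lemma mult_id_right[simp]: "mat2_mult M mat2_id = M"
  by (cases M) (simp add: mat2_mult_def mat2_id_def)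

definition rho :: "real \<times> real \<Rightarrow> real" where "rho v = fst v / snd v"

lemma act_app: "mat2_act_hom M x y = rho (app M (x,y))"
  by (cases M) (simp add: mat2_act_hom_def app_def rho_def)

lemma app_scale: "app M (c * x, c * y) = (c * fst (app M (x,y)), c * snd (app M (x,y)))"
  by (cases M) (simp add: app_def algebra_simps)

lemma rho_scale: "c \<noteq> 0 \<Longrightarrow> rho (c * x, c * y) = rho (x, y)"
  by (simp add: rho_def)


definition smult2 :: "real \<Rightarrow> mat2 \<Rightarrow> mat2" where
  "smult2 s M = (case M of (a,b,c,d) \<Rightarrow> (s*a, s*b, s*c, s*d))"

definition det2 :: "mat2 \<Rightarrow> real" where
  "det2 M = (case M of (a,b,c,d) \<Rightarrow> a*d - b*c)"

lemma mult_smult_left: "mat2_mult (smult2 s M) N = smult2 s (mat2_mult M N)"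
  by (cases M; cases N) (simp add: mat2_mult_def smult2_def algebra_simps)
lemma mult_smult_right: "mat2_mult M (smult2 s N) = smult2 s (mat2_mult M N)"
  by (cases M; cases N) (simp add: mat2_mult_def smult2_def algebra_simps)
lemma smult2_smult2: "smult2 s (smult2 t M) = smult2 (s*t) M"
  by (cases M) (simp add: smult2_def)
lemma smult2_1[simp]: "smult2 1 M = M"
  by (cases M) (simp add: smult2_def)
lemma app_smult2: "app (smult2 s M) v = (s * fst (app M v), s * snd (app M v))"
  by (cases M; cases v) (simp add: app_def smult2_def algebra_simps)
lemma act_smult2: "s \<noteq> 0 \<Longrightarrow> mat2_act_hom (smult2 s M) x y = mat2_act_hom M x y"
  by (simp add: act_app app_smult2 rho_def)

lemma mult_adj: "mat2_mult M (mat2_adj M) = smult2 (det2 M) mat2_id"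
  by (cases M) (simp add: mat2_mult_def mat2_adj_def smult2_def det2_def mat2_id_def)
lemma adj_mult: "mat2_mult (mat2_adj M) M = smult2 (det2 M) mat2_id"
  by (cases M) (simp add: mat2_mult_def mat2_adj_def smult2_def det2_def mat2_id_def algebra_simps)
lemma smult2_id_left: "mat2_mult (smult2 s mat2_id) M = smult2 s M"
  by (simp add: mult_smult_left)

lemma npow_add: "mat2_npow M (m + n) = mat2_mult (mat2_npow M m) (mat2_npow M n)"
  by (induction m) (simp_all add: mult_assoc)

lemma npow_comm: "mat2_mult M (mat2_npow M n) = mat2_mult (mat2_npow M n) M"
proof (induction n)
  case 0 then show ?case by simp
next
  case (Suc n)
  have "mat2_mult M (mat2_npow M (Suc n)) = mat2_mult M (mat2_mult (mat2_npow M n) M)"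
    by (simp add: Suc)
  also have "\<dots> = mat2_mult (mat2_npow M (Suc n)) M"
    by (simp add: mult_assoc)
  finally show ?case .
qed

lemma npow_Suc_right: "mat2_npow M (Suc n) = mat2_mult (mat2_npow M n) M"
  using npow_comm by simp

lemma ipow_nonneg: "k \<ge> 0 \<Longrightarrow> mat2_ipow M k = mat2_npow M (nat k)"
  by (simp add: mat2_ipow_def)
lemma ipow_neg: "k \<ge> 0 \<Longrightarrow> mat2_ipow M (-k) = mat2_npow (mat2_adj M) (nat k)"
  by (cases "k = 0") (simp_all add: mat2_ipow_def)

lemma ipow_add_nonneg: "j \<ge> 0 \<Longrightarrow> k \<ge> 0 \<Longrightarrow>
   mat2_mult (mat2_ipow M j) (mat2_ipow M k) = mat2_ipow M (j + k)"
  by (simp add: ipow_nonneg npow_add[symmetric] nat_add_distrib)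
lemma ipow_add_nonpos: "j \<ge> 0 \<Longrightarrow> k \<ge> 0 \<Longrightarrow>
   mat2_mult (mat2_ipow M (-j)) (mat2_ipow M (-k)) = mat2_ipow M (-(j + k))"
  using ipow_neg[of "j+k" M] by (simp add: ipow_neg npow_add[symmetric] nat_add_distrib)

lemma ipow_zero[simp]: "mat2_ipow M 0 = mat2_id"
  by (simp add: mat2_ipow_def)

lemma npow_adj_shift: "mat2_mult M (mat2_npow (mat2_adj M) (Suc n)) = smult2 (det2 M) (mat2_npow (mat2_adj M) n)"
  by (simp add: mult_assoc[symmetric] mult_adj smult2_id_left)

lemma ipow_shift_left: "\<exists>s. s \<noteq> 0 \<and> mat2_mult M (mat2_ipow M k) = smult2 s (mat2_ipow M (k + 1))"
  if "det2 M \<noteq> 0"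
proof (cases "k \<ge> 0")
  case True
  then have "mat2_mult M (mat2_ipow M k) = mat2_ipow M (k+1)"
    by (simp add: ipow_nonneg nat_add_distrib)
  then show ?thesis by (intro exI[of _ 1]) simp
next
  case False
  define n where "n = nat (-k) - 1"
  have n: "k = - int (Suc n)" using False by (simp add: n_def)
  have "mat2_mult M (mat2_ipow M k) = smult2 (det2 M) (mat2_npow (mat2_adj M) n)"
  proof -
    have e: "nat (- k) = Suc n" using n by simp
    have "\<not> k \<ge> 0" using False by simp
    then show ?thesis by (simp add: mat2_ipow_def e npow_adj_shift del: mat2_npow.simps)
  qed
  moreover have "mat2_ipow M (k + 1) = mat2_npow (mat2_adj M) n"
    using n by (simp add: mat2_ipow_def)
  ultimately show ?thesis using that by auto
qed

lemma ipow_comm: "mat2_mult M (mat2_ipow M k) = mat2_mult (mat2_ipow M k) M"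
proof (cases "k \<ge> 0")
  case True then show ?thesis by (simp add: ipow_nonneg npow_comm)
next
  case False
  have adjc: "mat2_mult M (mat2_adj M) = mat2_mult (mat2_adj M) M"
    by (simp add: mult_adj adj_mult)
  have "mat2_mult M (mat2_npow (mat2_adj M) n) = mat2_mult (mat2_npow (mat2_adj M) n) M" for n
  proof (induction n)
    case 0 then show ?case by simp
  next
    case (Suc n)
    have "mat2_mult M (mat2_npow (mat2_adj M) (Suc n)) = mat2_mult (mat2_mult M (mat2_adj M)) (mat2_npow (mat2_adj M) n)"
      by (simp add: mult_assoc)
    also have "\<dots> = mat2_mult (mat2_adj M) (mat2_mult M (mat2_npow (mat2_adj M) n))"
      by (simp add: adjc mult_assoc)
    also have "\<dots> = mat2_mult (mat2_npow (mat2_adj M) (Suc n)) M"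
      by (simp add: Suc mult_assoc)
    finally show ?case .
  qed
  then show ?thesis using False by (simp add: mat2_ipow_def)
qed

lemma ipow_shift_right: "\<exists>s. s \<noteq> 0 \<and> mat2_mult (mat2_ipow M k) M = smult2 s (mat2_ipow M (k + 1))"
  if "det2 M \<noteq> 0"
  using ipow_shift_left[OF that, of k] ipow_comm[of M k] by simp


fun Wd :: "real \<Rightarrow> bool \<Rightarrow> int list \<Rightarrow> mat2" where
  "Wd q b [] = mat2_id"
| "Wd q b (k # l) = mat2_mult (if b then mat2_ipow (sigma1 q) (-k) else mat2_ipow (sigma2 q) k) (Wd q (\<not> b) l)"

lemma beta_Wd: "even (length L) \<Longrightarrow> beta q L = Wd q True L"
  by (induction L rule: induct_list012) (simp_all add: mult_assoc)

lemma Wd_append: "Wd q b (l1 @ l2) = mat2_mult (Wd q b l1) (Wd q (if even (length l1) then b else \<not> b) l2)"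
  by (induction l1 arbitrary: b) (simp_all add: mult_assoc)

lemma beta_append: "even (length P) \<Longrightarrow> beta q (P @ L) = mat2_mult (beta q P) (beta q L)"
  by (induction P rule: induct_list012) (simp_all add: mult_assoc)

fun nrm :: "int list \<Rightarrow> int list" where
  "nrm (a # b # c # rest) = (if b = 0 then nrm ((a + c) # rest) else a # nrm (b # c # rest))"
| "nrm l = l"

lemma Wd_nrm: "\<forall>e\<in>set l. e \<ge> 0 \<Longrightarrow> Wd q b (nrm l) = Wd q b l"
proof (induction l arbitrary: b rule: nrm.induct)
  case (1 a b' c rest)
  show ?case
  proof (cases "b' = 0")
    case True
    have "Wd q b (nrm (a # b' # c # rest)) = Wd q b ((a + c) # rest)"
      using 1 True by simp
    also have "\<dots> = Wd q b (a # b' # c # rest)"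
    proof (cases b)
      case True
      then show ?thesis using \<open>b' = 0\<close> 1(3)
        by (simp add: mult_assoc[symmetric] ipow_add_nonpos)
    next
      case False
      then show ?thesis using \<open>b' = 0\<close> 1(3)
        by (simp add: mult_assoc[symmetric] ipow_add_nonneg)
    qed
    finally show ?thesis .
  next
    case False
    then show ?thesis using 1 by simp
  qed
qed simp_all

lemma beta_nrm: "\<forall>e\<in>set l. e \<ge> 0 \<Longrightarrow> even (length l) \<Longrightarrow> even (length (nrm l)) \<Longrightarrow>
    beta q (nrm l) = beta q l"
  by (simp add: beta_Wd Wd_nrm)

lemma nrm_nonempty: "l \<noteq> [] \<Longrightarrow> nrm l \<noteq> []"
  by (induction l rule: nrm.induct) auto

lemma cf_eval_cons: "l \<noteq> [] \<Longrightarrow> cf_eval (a # l) = of_int a + 1 / cf_eval l"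
  by (cases l) simp_all

lemma cf_eval_nrm: "cf_eval (nrm l) = cf_eval l"
proof (induction l rule: nrm.induct)
  case (1 a b c rest)
  show ?case
  proof (cases "b = 0")
    case True
    then have "cf_eval (nrm (a # b # c # rest)) = cf_eval ((a + c) # rest)" using 1 by simp
    also have "\<dots> = cf_eval (a # b # c # rest)"
      using True by (cases rest) simp_all
    finally show ?thesis .
  next
    case False
    then show ?thesis using 1 nrm_nonempty[of "b # c # rest"]
      by (simp add: cf_eval_cons del: cf_eval.simps)
  qed
qed simp_all

lemma nrm_props:
  assumes "l \<noteq> []" "\<forall>e\<in>set l. e \<ge> 0" "last l \<ge> 1"
  shows "nrm l \<noteq> [] \<and> (\<forall>e\<in>set (nrm l). e \<ge> 0) \<and> (\<forall>e\<in>set (tl (nrm l)). e \<ge> 1)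
     \<and> (even (length (nrm l)) = even (length l)) \<and> hd (nrm l) \<ge> hd l"
  using assms
proof (induction l rule: nrm.induct)
  case (1 a b c rest)
  show ?case
  proof (cases "b = 0")
    case True
    have "(a + c) # rest \<noteq> []" "\<forall>e\<in>set ((a + c) # rest). e \<ge> 0" "last ((a + c) # rest) \<ge> 1"
      using 1(3,4,5) by (auto split: if_splits)
    from 1(1)[OF True this] True 1(4) show ?thesis by auto
  next
    case False
    have h: "b # c # rest \<noteq> []" "\<forall>e\<in>set (b # c # rest). e \<ge> 0" "last (b # c # rest) \<ge> 1"
      using 1(3,4,5) by auto
    from 1(2)[OF False h] False 1(4) show ?thesis
      by (cases "nrm (b # c # rest)") auto
  qed
next
  case ("2_2" v)
  then show ?case by simp
next
  case ("2_3" v va)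
  then show ?case by (auto simp: last_ConsR)
qed auto


definition posl :: "int list \<Rightarrow> bool" where
  "posl L \<longleftrightarrow> L \<noteq> [] \<and> hd L \<ge> 0 \<and> (\<forall>b\<in>set (tl L). b \<ge> 1)"

lemma posl_Cons: "posl (a # T) \<longleftrightarrow> a \<ge> 0 \<and> (\<forall>b\<in>set T. b \<ge> 1)"
  by (simp add: posl_def)

lemma posl_tl: "posl (a # T) \<Longrightarrow> T \<noteq> [] \<Longrightarrow> posl T \<and> hd T \<ge> 1"
  by (cases T) (auto simp: posl_def)

lemma posl_range:
  "posl L \<Longrightarrow> of_int (hd L) \<le> cf_eval L \<and> cf_eval L \<le> of_int (hd L) + 1 \<and>
     (tl L \<noteq> [] \<longrightarrow> of_int (hd L) < cf_eval L)"
proof (induction L)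
  case Nil then show ?case by (simp add: posl_def)
next
  case (Cons a T)
  show ?case
  proof (cases "T = []")
    case True then show ?thesis by simp
  next
    case False
    from posl_tl[OF Cons.prems False] have pT: "posl T" "hd T \<ge> 1" by auto
    from Cons.IH[OF pT(1)] pT(2) have v: "cf_eval T \<ge> 1"
      by (smt (verit) of_int_le_iff of_int_1 order_trans)
    have e: "cf_eval (a # T) = of_int a + 1 / cf_eval T" using False by (simp add: cf_eval_cons)
    have "0 < 1 / cf_eval T" "1 / cf_eval T \<le> 1" using v by auto
    then show ?thesis using e False by simp
  qed
qed

lemma posl_unique:
  "posl L1 \<Longrightarrow> posl L2 \<Longrightarrow> even (length L1) = even (length L2) \<Longrightarrow> cf_eval L1 = cf_eval L2 \<Longrightarrow> L1 = L2"
proof (induction L1 arbitrary: L2)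
  case Nil then show ?case by (simp add: posl_def)
next
  case (Cons a T1)
  obtain b T2 where L2: "L2 = b # T2" using Cons.prems(2) by (cases L2) (auto simp: posl_def)
  have strict: "of_int c < cf_eval (c # T) \<and> cf_eval (c # T) < of_int c + 1"
    if "posl (c # T)" "T \<noteq> []" "tl T \<noteq> []" for c T
  proof -
    from posl_tl[OF that(1,2)] have pT: "posl T" "hd T \<ge> 1" by auto
    from posl_range[OF pT(1)] that(3) pT(2) have v: "cf_eval T > 1"
      by (smt (verit) of_int_le_iff of_int_1 order_le_less_trans)
    have e: "cf_eval (c # T) = of_int c + 1 / cf_eval T" using that(2) by (simp add: cf_eval_cons)
    have "0 < 1 / cf_eval T" "1 / cf_eval T < 1" using v by auto
    then show ?thesis using e by simp
  qed
  have intgap: False if "of_int c < (of_int d :: rat)" "of_int d < (of_int c :: rat) + 1" for c d :: int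
    using that by (metis of_int_1 of_int_add of_int_less_iff zless_imp_add1_zle not_le)
  show ?case
  proof (cases "T1 = []")
    case True
    show ?thesis
    proof (cases "T2 = []")
      case True
      then show ?thesis using Cons.prems \<open>T1 = []\<close> L2 by simp
    next
      case False
      have "odd (length T2) = False" using Cons.prems(3) \<open>T1 = []\<close> L2 by simp
      then have "tl T2 \<noteq> []" using False by (cases T2) auto
      from strict[of b T2] this False Cons.prems(2,4) L2 \<open>T1 = []\<close> show ?thesis
        using intgap[of b a] by simp
    qed
  next
    case False
    show ?thesis
    proof (cases "T2 = []")
      case True
      have "odd (length T1) = False" using Cons.prems(3) \<open>T2 = []\<close> L2 by simp
      then have "tl T1 \<noteq> []" using False by (cases T1) auto
      from strict[of a T1] this False Cons.prems(1,4) L2 \<open>T2 = []\<close> show ?thesis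
        using intgap[of a b] by simp
    next
      case False2: False
      from posl_tl[OF Cons.prems(1) False] have p1: "posl T1" "hd T1 \<ge> 1" by auto
      from posl_tl[OF Cons.prems(2)[unfolded L2] False2] have p2: "posl T2" "hd T2 \<ge> 1" by auto
      have r1: "of_int a \<le> cf_eval (a # T1) \<and> cf_eval (a # T1) \<le> of_int a + 1 \<and> of_int a < cf_eval (a # T1)"
        using posl_range[OF Cons.prems(1)] False by simp
      have r2: "of_int b \<le> cf_eval (b # T2) \<and> cf_eval (b # T2) \<le> of_int b + 1 \<and> of_int b < cf_eval (b # T2)"
        using posl_range[OF Cons.prems(2)[unfolded L2]] False2 by simp
      have "of_int a < (of_int b :: rat) + 1" "of_int b < (of_int a :: rat) + 1"
        using r1 r2 Cons.prems(4) L2 by auto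
      then have ab: "a = b" by (metis of_int_1 of_int_add of_int_less_iff zless_imp_add1_zle antisym
             le_less not_le zle_add1_eq_le)
      have "1 / cf_eval T1 = 1 / cf_eval T2"
        using Cons.prems(4) L2 ab False False2 by (simp add: cf_eval_cons)
      then have "cf_eval T1 = cf_eval T2" by simp
      moreover have "even (length T1) = even (length T2)" using Cons.prems(3) L2 by simp
      ultimately have "T1 = T2" using Cons.IH p1(1) p2(1) by blast
      then show ?thesis using ab L2 by simp
    qed
  qed
qed


lemma cf_exists_nat:
  "0 < q \<Longrightarrow> q \<le> p \<Longrightarrow>
    (\<exists>L. posl L \<and> hd L \<ge> 1 \<and> odd (length L) \<and> cf_eval L = of_nat p / of_nat q) \<and>
    (q < p \<longrightarrow> (\<exists>L. posl L \<and> hd L \<ge> 1 \<and> even (length L) \<and> cf_eval L = of_nat p / of_nat q))"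
proof (induction q arbitrary: p rule: less_induct)
  case (less q)
  define a where "a = p div q"
  define r where "r = p mod q"
  have pq: "p = a * q + r" by (simp add: a_def r_def)
  have a1: "a \<ge> 1" using less.prems by (simp add: a_def Suc_le_eq div_greater_zero_iff)
  have rq: "r < q" using less.prems by (simp add: r_def)
  show ?case
  proof (cases "r = 0")
    case True
    have x: "(of_nat p / of_nat q :: rat) = of_int (int a)"
      using pq True less.prems by simp
    have odd: "posl [int a] \<and> hd [int a] \<ge> 1 \<and> odd (length [int a]) \<and> cf_eval [int a] = of_nat p / of_nat q"
      using a1 x by (simp add: posl_def)
    have even: "posl [int a - 1, 1] \<and> hd [int a - 1, 1] \<ge> 1 \<and> even (length [int a - 1, 1]) \<and>
        cf_eval [int a - 1, 1] = of_nat p / of_nat q" if "q < p"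
    proof -
      have "a \<ge> 2" using that pq True less.prems
        by (metis add.right_neutral mult_1 nat_less_le not_less_eq_eq one_add_one order_antisym_conv
             mult_le_mono1 le_add2 Suc_1 le_antisym less_2_cases_iff nat_mult_1 numeral_2_eq_2)
      then show ?thesis using x by (simp add: posl_def)
    qed
    show ?thesis using odd even by blast
  next
    case False
    then have r0: "0 < r" by simp
    from less.IH[OF rq r0, of q] rq obtain Lo Le where
      O: "posl Lo" "hd Lo \<ge> 1" "odd (length Lo)" "cf_eval Lo = of_nat q / of_nat r" and
      E: "posl Le" "hd Le \<ge> 1" "even (length Le)" "cf_eval Le = of_nat q / of_nat r"
      by auto
    have key: "cf_eval (int a # T) = of_nat p / of_nat q" if "T \<noteq> []" "cf_eval T = of_nat q / of_nat r" for T
    proof -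
      have "cf_eval (int a # T) = of_nat a + of_nat r / of_nat q"
        using that by (simp add: cf_eval_cons)
      also have "\<dots> = of_nat p / of_nat q" using pq less.prems(1)
        by (simp add: field_simps)
      finally show ?thesis .
    qed
    have pT: "posl (int a # T)" if "posl T" "hd T \<ge> 1" for T
      using that a1 unfolding posl_def by (cases T) auto
    have "Lo \<noteq> []" "Le \<noteq> []" using O E by (auto simp: posl_def)
    then show ?thesis
    proof (intro conjI impI)
      show "\<exists>L. posl L \<and> 1 \<le> hd L \<and> odd (length L) \<and> cf_eval L = of_nat p / of_nat q"
        by (rule exI[of _ "int a # Le"]) (use \<open>Le \<noteq> []\<close> key[OF _ E(4)] pT[OF E(1,2)] E(3) a1 in auto)
      show "\<exists>L. posl L \<and> 1 \<le> hd L \<and> even (length L) \<and> cf_eval L = of_nat p / of_nat q"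
        by (rule exI[of _ "int a # Lo"]) (use \<open>Lo \<noteq> []\<close> key[OF _ O(4)] pT[OF O(1,2)] O(3) a1 in auto)
    qed
  qed
qed

lemma rat_pos_nat: "(x::rat) > 0 \<Longrightarrow> \<exists>p q::nat. 0 < p \<and> 0 < q \<and> x = of_nat p / of_nat q"
proof -
  assume x: "x > 0"
  obtain n d where nd: "quotient_of x = (n, d)" by (cases "quotient_of x")
  have d: "d > 0" using quotient_of_denom_pos[OF nd] .
  have xe: "x = of_int n / of_int d" using quotient_of_div[OF nd] .
  have n: "n > 0" using x xe d by (simp add: zero_less_divide_iff)
  show ?thesis
    by (rule exI[of _ "nat n"], rule exI[of _ "nat d"]) (use n d xe in simp)
qed

lemma cf_exists_pos: "(x::rat) > 0 \<Longrightarrow> \<exists>L. posl L \<and> even (length L) \<and> cf_eval L = x"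
proof -
  assume x: "x > 0"
  obtain p q :: nat where pq: "0 < p" "0 < q" "x = of_nat p / of_nat q" using rat_pos_nat[OF x] by blast
  show ?thesis
  proof (cases "q < p")
    case True
    then show ?thesis using cf_exists_nat[of q p] pq by auto
  next
    case False
    then have "p \<le> q" by simp
    from cf_exists_nat[OF pq(1) this] obtain Lo where
      O: "posl Lo" "hd Lo \<ge> 1" "odd (length Lo)" "cf_eval Lo = of_nat q / of_nat p" by auto
    have "Lo \<noteq> []" using O by (simp add: posl_def)
    then have "cf_eval (0 # Lo) = x" using O(4) pq by (simp add: cf_eval_cons)
    moreover have "posl (0 # Lo)" using O(1,2) by (cases Lo) (auto simp: posl_def)
    ultimately show ?thesis using O(3) by (intro exI[of _ "0 # Lo"]) simp
  qed
qed

lemma cf_eval_uminus: "cf_eval (map uminus L) = - cf_eval L"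
  by (induction L rule: cf_eval.induct) simp_all

lemma cf_valid_iff: "cf_valid L \<longleftrightarrow> even (length L) \<and> (posl L \<or> posl (map uminus L))"
proof -
  have "(\<forall>b\<in>set (tl L). b \<le> -1) \<longleftrightarrow> (\<forall>b\<in>set (map uminus (tl L)). b \<ge> 1)" by auto
  then show ?thesis unfolding cf_valid_def posl_def
    by (cases L) auto
qed

lemma posl_pos: "posl L \<Longrightarrow> even (length L) \<Longrightarrow> cf_eval L > 0"
proof -
  assume a: "posl L" "even (length L)"
  then have "tl L \<noteq> []" by (cases L) (auto simp: posl_def)
  with posl_range[OF a(1)] a(1) show ?thesis unfolding posl_def
    by (smt (verit) of_int_0_le_iff order_le_less_trans)
qed

lemma valid_unique: "cf_valid L1 \<Longrightarrow> cf_valid L2 \<Longrightarrow> cf_eval L1 = cf_eval L2 \<Longrightarrow> L1 = L2"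
proof -
  assume v: "cf_valid L1" "cf_valid L2" "cf_eval L1 = cf_eval L2"
  from v(1,2) have e: "even (length L1)" "even (length L2)" by (auto simp: cf_valid_iff)
  consider "posl L1" | "posl (map uminus L1)" using v(1) by (auto simp: cf_valid_iff)
  then show ?thesis
  proof cases
    case 1
    then have p1: "cf_eval L1 > 0" using posl_pos e by blast
    have "posl L2"
    proof (rule ccontr)
      assume "\<not> posl L2"
      then have "posl (map uminus L2)" using v(2) by (auto simp: cf_valid_iff)
      then have "cf_eval (map uminus L2) > 0" using posl_pos e by simp
      then show False using p1 v(3) by (simp add: cf_eval_uminus)
    qed
    then show ?thesis using posl_unique 1 e v(3) by simp
  next
    case 2
    then have p1: "cf_eval L1 < 0" using posl_pos[OF 2] e by (simp add: cf_eval_uminus)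
    have "posl (map uminus L2)"
    proof (rule ccontr)
      assume "\<not> posl (map uminus L2)"
      then have "posl L2" using v(2) by (auto simp: cf_valid_iff)
      then have "cf_eval L2 > 0" using posl_pos e by simp
      then show False using p1 v(3) by simp
    qed
    then have "map uminus L1 = map uminus L2"
      using posl_unique[OF 2] e v(3) by (simp add: cf_eval_uminus)
    then have "map uminus (map uminus L1) = map uminus (map uminus L2)" by simp
    then show ?thesis by (simp add: comp_def)
  qed
qed

lemma valid_nonzero: "cf_valid L \<Longrightarrow> cf_eval L \<noteq> 0"
proof -
  assume v: "cf_valid L"
  then have e: "even (length L)" by (simp add: cf_valid_iff)
  consider "posl L" | "posl (map uminus L)" using v by (auto simp: cf_valid_iff)
  then show ?thesis
  proof cases
    case 1 then show ?thesis using posl_pos e by fastforce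
  next
    case 2 then show ?thesis using posl_pos[OF 2] e by (simp add: cf_eval_uminus)
  qed
qed

lemma cf_exp_eq: "cf_valid L \<Longrightarrow> cf_expansion (cf_eval L) = L"
proof -
  assume v: "cf_valid L"
  have "(THE as. cf_valid as \<and> cf_eval as = cf_eval L) = L"
    by (rule the_equality) (use v valid_unique in auto)
  then show ?thesis using valid_nonzero[OF v] by (simp add: cf_expansion_def)
qed

lemma cf_exp_valid: "x \<noteq> 0 \<Longrightarrow> cf_valid (cf_expansion x) \<and> cf_eval (cf_expansion x) = x"
proof -
  assume x: "x \<noteq> 0"
  have "\<exists>L. cf_valid L \<and> cf_eval L = x"
  proof (cases "x > 0")
    case True
    then obtain L where "posl L" "even (length L)" "cf_eval L = x" using cf_exists_pos by blast
    then show ?thesis by (auto simp: cf_valid_iff)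
  next
    case False
    then have "-x > 0" using x by simp
    then obtain L where L: "posl L" "even (length L)" "cf_eval L = -x" using cf_exists_pos by blast
    have "posl (map uminus (map uminus L))" using L(1) by (simp add: comp_def)
    then have "cf_valid (map uminus L)" using L(2) by (simp add: cf_valid_iff)
    moreover have "cf_eval (map uminus L) = x" using L(3) by (simp add: cf_eval_uminus)
    ultimately show ?thesis by blast
  qed
  then obtain L where "cf_valid L" "cf_eval L = x" by blast
  then show ?thesis using cf_exp_eq by auto
qed


lemma npow_s1_1: "mat2_npow (1, -1, 0, 1) n = (1, - real n, 0, 1)"
  by (induction n) (simp_all add: mat2_mult_def mat2_id_def)
lemma npow_s1_1a: "mat2_npow (1, 1, 0, 1) n = (1, real n, 0, 1)"
  by (induction n) (simp_all add: mat2_mult_def mat2_id_def)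
lemma npow_s2_1: "mat2_npow (1, 0, 1, 1) n = (1, 0, real n, 1)"
  by (induction n) (simp_all add: mat2_mult_def mat2_id_def)
lemma npow_s2_1a: "mat2_npow (1, 0, -1, 1) n = (1, 0, - real n, 1)"
  by (induction n) (simp_all add: mat2_mult_def mat2_id_def)

lemma ipow_s1_1: "mat2_ipow (sigma1 1) k = (1, - of_int k, 0, 1)"
  by (simp add: mat2_ipow_def sigma1_def mat2_adj_def npow_s1_1 npow_s1_1a)
lemma ipow_s2_1: "mat2_ipow (sigma2 1) k = (1, 0, of_int k, 1)"
  by (simp add: mat2_ipow_def sigma2_def mat2_adj_def npow_s2_1 npow_s2_1a)

lemma app_beta1_pair: "app (beta 1 rest) v = (X, Y) \<Longrightarrow> app (beta 1 (a # b # rest)) v =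
   (X + of_int a * (of_int b * X + Y), of_int b * X + Y)"
  by (simp add: app_mult ipow_s1_1 ipow_s2_1) (simp add: app_def algebra_simps)

lemma cf_beta1_pos:
  "even (length L) \<Longrightarrow> L \<noteq> [] \<Longrightarrow> \<forall>e\<in>set L. e \<ge> 0 \<Longrightarrow> last L \<ge> 1 \<Longrightarrow>
   fst (app (beta 1 L) (1,0)) > 0 \<and> snd (app (beta 1 L) (1,0)) > 0 \<and>
   real_of_rat (cf_eval L) = rho (app (beta 1 L) (1,0))"
proof (induction L rule: induct_list012)
  case (3 a b rest)
  show ?case
  proof (cases "rest = []")
    case True
    have b: "b \<ge> 1" "a \<ge> 0" using 3 True by auto
    then have "(0::real) \<le> of_int a * of_int b" by simp
    have e: "app (beta 1 [a, b]) (1, 0) = (1 + of_int a * of_int b, of_int b)"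
      using app_beta1_pair[of "[]" "(1,0)" 1 0 a b] by simp
    have pos: "0 < 1 + real_of_int a * real_of_int b" using \<open>(0::real) \<le> of_int a * of_int b\<close> by linarith
    show ?thesis using True b pos
      by (simp add: e rho_def of_rat_add of_rat_divide of_rat_mult field_simps del: beta.simps)
  next
    case False
    obtain X Y where XY: "app (beta 1 rest) (1,0) = (X, Y)" by (cases "app (beta 1 rest) (1,0)")
    have IH: "X > 0" "Y > 0" "real_of_rat (cf_eval rest) = X / Y"
      using 3(1) 3(3-6) False XY by (auto simp: rho_def)
    have ab: "a \<ge> 0" "b \<ge> 0" using 3 by auto
    have Y': "of_int b * X + Y > 0" using IH ab by (smt (verit) mult_nonneg_nonneg of_int_0_le_iff)
    have X': "X + of_int a * (of_int b * X + Y) > 0" using IH ab Y'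
      by (smt (verit) mult_nonneg_nonneg of_int_0_le_iff)
    have "real_of_rat (cf_eval (a # b # rest)) = of_int a + 1 / (of_int b + 1 / (X / Y))"
      using False IH by (simp add: cf_eval_cons of_rat_add of_rat_divide)
    also have "\<dots> = (X + of_int a * (of_int b * X + Y)) / (of_int b * X + Y)"
      using IH Y' by (simp add: field_simps)
    finally show ?thesis using X' Y' by (simp add: app_beta1_pair[OF XY] rho_def del: beta.simps)
  qed
qed simp_all

lemma cf_beta1_neg:
  "even (length L) \<Longrightarrow> L \<noteq> [] \<Longrightarrow> hd L \<le> 0 \<Longrightarrow> \<forall>e\<in>set (tl L). e \<le> -1 \<Longrightarrow>
   fst (app (beta 1 L) (1,0)) > 0 \<and> snd (app (beta 1 L) (1,0)) < 0 \<and>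
   real_of_rat (cf_eval L) = rho (app (beta 1 L) (1,0))"
proof (induction L rule: induct_list012)
  case (3 a b rest)
  show ?case
  proof (cases "rest = []")
    case True
    have b: "b \<le> -1" "a \<le> 0" using 3 True by auto
    then have "(0::real) \<le> of_int a * of_int b" by (simp add: mult_nonpos_nonpos)
    have e: "app (beta 1 [a, b]) (1, 0) = (1 + of_int a * of_int b, of_int b)"
      using app_beta1_pair[of "[]" "(1,0)" 1 0 a b] by simp
    have pos: "0 < 1 + real_of_int a * real_of_int b" using \<open>(0::real) \<le> of_int a * of_int b\<close> by linarith
    show ?thesis using True b pos
      by (simp add: e rho_def of_rat_add of_rat_divide of_rat_mult field_simps del: beta.simps)
  next
    case False
    obtain X Y where XY: "app (beta 1 rest) (1,0) = (X, Y)" by (cases "app (beta 1 rest) (1,0)")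
    have hr: "hd rest \<le> 0" "\<forall>e\<in>set (tl rest). e \<le> -1" using 3(6) False by (cases rest; auto)+
    have IH: "X > 0" "Y < 0" "real_of_rat (cf_eval rest) = X / Y"
      using 3(1)[OF _ False hr] 3(3) XY by (auto simp: rho_def)
    have ab: "a \<le> 0" "b \<le> -1" using 3 by auto
    have "real_of_int b \<le> -1" using ab by simp
    then have "real_of_int b * X \<le> -1 * X" using IH by (intro mult_right_mono) auto
    then have Y': "of_int b * X + Y < 0" using IH by linarith
    have X': "X + of_int a * (of_int b * X + Y) > 0" using IH ab Y'
      by (smt (verit) mult_nonpos_nonpos of_int_le_0_iff)
    have "real_of_rat (cf_eval (a # b # rest)) = of_int a + 1 / (of_int b + 1 / (X / Y))"
      using False IH by (simp add: cf_eval_cons of_rat_add of_rat_divide)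
    also have "\<dots> = (X + of_int a * (of_int b * X + Y)) / (of_int b * X + Y)"
      using IH Y' by (simp add: field_simps)
    finally show ?thesis using X' Y' by (simp add: app_beta1_pair[OF XY] rho_def del: beta.simps)
  qed
qed simp_all

definition intmat :: "mat2 \<Rightarrow> bool" where
  "intmat M \<longleftrightarrow> (case M of (a,b,c,d) \<Rightarrow> a \<in> \<int> \<and> b \<in> \<int> \<and> c \<in> \<int> \<and> d \<in> \<int>)"
definition nnmat :: "mat2 \<Rightarrow> bool" where
  "nnmat M \<longleftrightarrow> (case M of (a,b,c,d) \<Rightarrow> a \<ge> 0 \<and> b \<ge> 0 \<and> c \<ge> 0 \<and> d \<ge> 0)"

lemma det2_mult: "det2 (mat2_mult M N) = det2 M * det2 N"
  by (cases M; cases N) (simp add: det2_def mat2_mult_def algebra_simps)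

lemma beta1_props: "even (length L) \<Longrightarrow> intmat (beta 1 L) \<and> det2 (beta 1 L) = 1"
proof (induction L rule: induct_list012)
  case (3 a b rest)
  then have IH: "intmat (beta 1 rest)" "det2 (beta 1 rest) = 1" by auto
  obtain p p' r r' where M: "beta 1 rest = (p, p', r, r')" by (cases "beta 1 rest") auto
  show ?case using IH M
    by (simp add: ipow_s1_1 ipow_s2_1 mat2_mult_def intmat_def det2_def) (simp add: algebra_simps)
qed (simp_all add: intmat_def det2_def mat2_id_def)

lemma beta1_nn: "even (length L) \<Longrightarrow> \<forall>e\<in>set L. e \<ge> 0 \<Longrightarrow> nnmat (beta 1 L)"
proof (induction L rule: induct_list012)
  case (3 a b rest)
  then have IH: "nnmat (beta 1 rest)" "a \<ge> 0" "b \<ge> 0" by auto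
  obtain p p' r r' where M: "beta 1 rest = (p, p', r, r')" by (cases "beta 1 rest") auto
  show ?case using IH M
    by (simp add: ipow_s1_1 ipow_s2_1 mat2_mult_def nnmat_def)
qed (simp_all add: nnmat_def mat2_id_def)


definition Ip :: "real \<times> real \<Rightarrow> bool" where "Ip v \<longleftrightarrow> fst v \<ge> 0 \<and> snd v > 0"
definition I0 :: "real \<times> real \<Rightarrow> bool" where "I0 v \<longleftrightarrow> fst v \<ge> 0 \<and> snd v \<ge> 0 \<and> (fst v > 0 \<or> snd v > 0)"

lemma Ip_I0: "Ip v \<Longrightarrow> I0 v" by (simp add: Ip_def I0_def)

context
  fixes q :: real
  assumes q0: "0 < q"
begin

lemma adjs1: "mat2_adj (sigma1 q) = (1, 1/q, 0, 1/q)"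
  by (simp add: mat2_adj_def sigma1_def)

lemma A_Ip: "Ip v \<Longrightarrow> Ip (app (mat2_adj (sigma1 q)) v) \<and> rho (app (mat2_adj (sigma1 q)) v) = q * rho v + 1"
  using q0 by (cases v) (simp add: adjs1 app_def Ip_def rho_def field_simps)
lemma A_I0: "I0 v \<Longrightarrow> I0 (app (mat2_adj (sigma1 q)) v)"
proof -
  assume v: "I0 v"
  obtain x y where xy: "v = (x, y)" by (cases v)
  have x: "x \<ge> 0" "y \<ge> 0" "x > 0 \<or> y > 0" using v xy by (auto simp: I0_def)
  have "y / q \<ge> 0" using x q0 by simp
  moreover have "y > 0 \<Longrightarrow> y / q > 0" using q0 by simp
  ultimately show ?thesis using x by (auto simp: xy adjs1 app_def I0_def)
qed
lemma B_Ip: "Ip v \<Longrightarrow> Ip (app (sigma2 q) v) \<and> rho (app (sigma2 q) v) = q * rho v / (q * rho v + 1)"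
proof -
  assume v: "Ip v"
  obtain x y where xy: "v = (x, y)" by (cases v)
  have x: "x \<ge> 0" "y > 0" using v xy by (auto simp: Ip_def)
  have d: "x + y / q > 0" using x q0 by (simp add: add_nonneg_pos)
  have d2: "q * (x / y) + 1 > 0" using x q0 by (simp add: add_nonneg_pos)
  have "x / (x + y / q) = q * (x / y) / (q * (x / y) + 1)"
    using x q0 by (simp add: field_simps)
  then show ?thesis using d x by (simp add: xy sigma2_def app_def Ip_def rho_def)
qed
lemma B_I0: "I0 v \<Longrightarrow> Ip (app (sigma2 q) v) \<and> rho (app (sigma2 q) v) \<le> 1"
proof -
  assume v: "I0 v"
  obtain x y where xy: "v = (x, y)" by (cases v)
  have x: "x \<ge> 0" "y \<ge> 0" "x > 0 \<or> y > 0" using v xy by (auto simp: I0_def)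
  have d: "x + y / q > 0" using x q0 by (auto intro: add_pos_nonneg add_nonneg_pos)
  have "x \<le> x + y / q" using x q0 by simp
  then have "x / (x + y / q) \<le> 1" using d by simp
  then show ?thesis using d x by (simp add: xy sigma2_def app_def Ip_def rho_def)
qed

lemma An_Ip: "Ip v \<Longrightarrow> Ip (app (mat2_npow (mat2_adj (sigma1 q)) n) v) \<and>
   rho (app (mat2_npow (mat2_adj (sigma1 q)) n) v) - 1/(1-q) = q^n * (rho v - 1/(1-q))"
  if "q < 1"
proof (induction n)
  case 0 then show ?case by simp
next
  case (Suc n)
  let ?u = "app (mat2_npow (mat2_adj (sigma1 q)) n) v"
  from Suc A_Ip[of ?u] have "Ip (app (mat2_adj (sigma1 q)) ?u)"
    "rho (app (mat2_adj (sigma1 q)) ?u) = q * rho ?u + 1" by auto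
  moreover have "q * rho ?u + 1 - 1/(1-q) = q * (rho ?u - 1/(1-q))"
    using that by (simp add: field_simps)
  ultimately show ?case using Suc by (simp add: app_mult)
qed

lemma An_I0: "I0 v \<Longrightarrow> I0 (app (mat2_npow (mat2_adj (sigma1 q)) n) v)"
  by (induction n) (simp_all add: app_mult A_I0)

lemma Bn_Ip: "Ip v \<Longrightarrow> Ip (app (mat2_npow (sigma2 q) n) v) \<and>
   rho (app (mat2_npow (sigma2 q) n) v) \<le> q^n * rho v \<and> rho (app (mat2_npow (sigma2 q) n) v) \<ge> 0"
proof (induction n)
  case 0 then show ?case by (simp add: Ip_def rho_def)
next
  case (Suc n)
  let ?u = "app (mat2_npow (sigma2 q) n) v"
  from Suc B_Ip[of ?u] have I: "Ip (app (sigma2 q) ?u)"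
    "rho (app (sigma2 q) ?u) = q * rho ?u / (q * rho ?u + 1)" by auto
  have r: "rho ?u \<ge> 0" "rho ?u \<le> q^n * rho v" using Suc by auto
  have qz: "q * rho ?u \<ge> 0" using r q0 by simp
  have "q * rho ?u / (q * rho ?u + 1) \<le> q * rho ?u / 1"
    by (rule divide_left_mono) (use qz in auto)
  then have "q * rho ?u / (q * rho ?u + 1) \<le> q * rho ?u" by simp
  also have "\<dots> \<le> q * (q^n * rho v)" using r q0 by simp
  finally have "rho (app (sigma2 q) ?u) \<le> q^(Suc n) * rho v" using I by simp
  moreover have "rho (app (sigma2 q) ?u) \<ge> 0" using I r q0 by simp
  ultimately show ?case using I by (simp add: app_mult)
qed

lemma Bn_I0: "I0 v \<Longrightarrow> n \<ge> 1 \<Longrightarrow> Ip (app (mat2_npow (sigma2 q) n) v) \<and>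
   rho (app (mat2_npow (sigma2 q) n) v) \<le> q^(n-1) \<and> rho (app (mat2_npow (sigma2 q) n) v) \<ge> 0"
proof -
  assume v: "I0 v" and n: "n \<ge> 1"
  obtain m where m: "n = Suc m" using n by (cases n) auto
  have e: "mat2_npow (sigma2 q) n = mat2_mult (mat2_npow (sigma2 q) m) (sigma2 q)"
    using m npow_Suc_right by simp
  from B_I0[OF v] have u: "Ip (app (sigma2 q) v)" "rho (app (sigma2 q) v) \<le> 1" by auto
  have "q^m * rho (app (sigma2 q) v) \<le> q^m * 1"
    using u(2) q0 by (intro mult_left_mono) auto
  with Bn_Ip[OF u(1), of m] show ?thesis
    unfolding e app_mult using m by auto
qed

lemma ipow_s1_nonneg: "k \<ge> 0 \<Longrightarrow> mat2_ipow (sigma1 q) (-k) = mat2_npow (mat2_adj (sigma1 q)) (nat k)"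
  by (rule ipow_neg)
lemma ipow_s2_nonneg: "k \<ge> 0 \<Longrightarrow> mat2_ipow (sigma2 q) k = mat2_npow (sigma2 q) (nat k)"
  by (rule ipow_nonneg)

lemma beta_pair_app: "a \<ge> 0 \<Longrightarrow> b \<ge> 0 \<Longrightarrow> app (beta q (a # b # rest)) v =
  app (mat2_npow (mat2_adj (sigma1 q)) (nat a)) (app (mat2_npow (sigma2 q) (nat b)) (app (beta q rest) v))"
  by (simp add: app_mult ipow_s1_nonneg ipow_s2_nonneg)

lemma An_Ip0: "Ip v \<Longrightarrow> Ip (app (mat2_npow (mat2_adj (sigma1 q)) n) v)"
  by (induction n) (simp_all add: app_mult A_Ip)

lemma beta_Ip: "even (length L) \<Longrightarrow> \<forall>e\<in>set L. e \<ge> 0 \<Longrightarrow> Ip v \<Longrightarrow> Ip (app (beta q L) v)"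
proof (induction L rule: induct_list012)
  case (3 a b rest)
  then have "Ip (app (beta q rest) v)" by auto
  then have "Ip (app (mat2_npow (sigma2 q) (nat b)) (app (beta q rest) v))" using Bn_Ip by blast
  then show ?case using 3(4) An_Ip0 by (simp add: beta_pair_app del: beta.simps)
qed simp_all

end


definition sumn :: "int list \<Rightarrow> nat" where "sumn L = sum_list (map nat L)"

context
  fixes q :: real
  assumes q0: "0 < q"
begin

lemma B_lip: "Ip u \<Longrightarrow> Ip u' \<Longrightarrow> \<bar>rho (app (sigma2 q) u) - rho (app (sigma2 q) u')\<bar> \<le> q * \<bar>rho u - rho u'\<bar>"
proof -
  assume u: "Ip u" "Ip u'"
  define z where "z = rho u"
  define z' where "z' = rho u'"
  have z: "z \<ge> 0" "z' \<ge> 0" using u by (auto simp: z_def z'_def Ip_def rho_def)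
  have d: "q * z + 1 \<ge> 1" "q * z' + 1 \<ge> 1" using z q0 by auto
  have e: "q * z / (q * z + 1) - q * z' / (q * z' + 1) = q * (z - z') / ((q * z + 1) * (q * z' + 1))"
    using d by (simp add: field_simps)
  have "1 * 1 \<le> (q * z + 1) * (q * z' + 1)" using d by (intro mult_mono) auto
  then have dd: "1 \<le> (q * z + 1) * (q * z' + 1)" by simp
  have a1: "\<bar>q * (z - z') / ((q * z + 1) * (q * z' + 1))\<bar> = q * \<bar>z - z'\<bar> / ((q * z + 1) * (q * z' + 1))"
    using d q0 by (simp add: abs_mult abs_divide)
  have a2: "q * \<bar>z - z'\<bar> / ((q * z + 1) * (q * z' + 1)) \<le> q * \<bar>z - z'\<bar> / 1"
    by (rule divide_left_mono) (use dd q0 in auto)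
  have "\<bar>q * z / (q * z + 1) - q * z' / (q * z' + 1)\<bar> \<le> q * \<bar>z - z'\<bar>"
    using a1 a2 e by simp
  then show ?thesis using B_Ip[OF q0 u(1)] B_Ip[OF q0 u(2)] by (simp add: z_def z'_def)
qed

lemma A_lip: "Ip u \<Longrightarrow> Ip u' \<Longrightarrow> \<bar>rho (app (mat2_adj (sigma1 q)) u) - rho (app (mat2_adj (sigma1 q)) u')\<bar> = q * \<bar>rho u - rho u'\<bar>"
  using A_Ip[OF q0, of u] A_Ip[OF q0, of u'] q0
  by (simp add: abs_mult flip: right_diff_distrib)

lemma Bn_lip: "Ip u \<Longrightarrow> Ip u' \<Longrightarrow> \<bar>rho (app (mat2_npow (sigma2 q) n) u) - rho (app (mat2_npow (sigma2 q) n) u')\<bar> \<le> q^n * \<bar>rho u - rho u'\<bar>"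
proof (induction n)
  case 0 then show ?case by simp
next
  case (Suc n)
  let ?v = "app (mat2_npow (sigma2 q) n) u" and ?v' = "app (mat2_npow (sigma2 q) n) u'"
  have I: "Ip ?v" "Ip ?v'" using Bn_Ip[OF q0] Suc.prems by blast+
  have "\<bar>rho (app (sigma2 q) ?v) - rho (app (sigma2 q) ?v')\<bar> \<le> q * \<bar>rho ?v - rho ?v'\<bar>"
    using B_lip[OF I] .
  also have "\<dots> \<le> q * (q^n * \<bar>rho u - rho u'\<bar>)" using Suc q0 by (intro mult_left_mono) auto
  finally show ?case by (simp add: app_mult)
qed

lemma An_lip: "Ip u \<Longrightarrow> Ip u' \<Longrightarrow> \<bar>rho (app (mat2_npow (mat2_adj (sigma1 q)) n) u) - rho (app (mat2_npow (mat2_adj (sigma1 q)) n) u')\<bar> \<le> q^n * \<bar>rho u - rho u'\<bar>"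
proof (induction n)
  case 0 then show ?case by simp
next
  case (Suc n)
  let ?v = "app (mat2_npow (mat2_adj (sigma1 q)) n) u" and ?v' = "app (mat2_npow (mat2_adj (sigma1 q)) n) u'"
  have I: "Ip ?v" "Ip ?v'" using An_Ip0[OF q0] Suc.prems by blast+
  have "\<bar>rho (app (mat2_adj (sigma1 q)) ?v) - rho (app (mat2_adj (sigma1 q)) ?v')\<bar> = q * \<bar>rho ?v - rho ?v'\<bar>"
    using A_lip[OF I] .
  also have "\<dots> \<le> q * (q^n * \<bar>rho u - rho u'\<bar>)" using Suc q0 by (intro mult_left_mono) auto
  finally show ?case by (simp add: app_mult)
qed

lemma beta_lip: "even (length L) \<Longrightarrow> \<forall>e\<in>set L. e \<ge> 0 \<Longrightarrow> Ip u \<Longrightarrow> Ip u' \<Longrightarrow>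
   \<bar>rho (app (beta q L) u) - rho (app (beta q L) u')\<bar> \<le> q ^ sumn L * \<bar>rho u - rho u'\<bar>"
proof (induction L rule: induct_list012)
  case (3 a b rest)
  let ?v = "app (beta q rest) u" and ?v' = "app (beta q rest) u'"
  have ab: "a \<ge> 0" "b \<ge> 0" using 3 by auto
  have I: "Ip ?v" "Ip ?v'" using beta_Ip[OF q0] 3 by auto
  have IH: "\<bar>rho ?v - rho ?v'\<bar> \<le> q ^ sumn rest * \<bar>rho u - rho u'\<bar>" using 3 by auto
  let ?w = "app (mat2_npow (sigma2 q) (nat b)) ?v" and ?w' = "app (mat2_npow (sigma2 q) (nat b)) ?v'"
  have I2: "Ip ?w" "Ip ?w'" using Bn_Ip[OF q0] I by blast+
  have "\<bar>rho (app (mat2_npow (mat2_adj (sigma1 q)) (nat a)) ?w) - rho (app (mat2_npow (mat2_adj (sigma1 q)) (nat a)) ?w')\<bar>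
      \<le> q^(nat a) * \<bar>rho ?w - rho ?w'\<bar>" using An_lip[OF I2] .
  also have "\<dots> \<le> q^(nat a) * (q^(nat b) * \<bar>rho ?v - rho ?v'\<bar>)"
    using Bn_lip[OF I] q0 by (intro mult_left_mono) auto
  also have "\<dots> \<le> q^(nat a) * (q^(nat b) * (q ^ sumn rest * \<bar>rho u - rho u'\<bar>))"
    using IH q0 by (intro mult_left_mono) auto
  also have "\<dots> = q ^ sumn (a # b # rest) * \<bar>rho u - rho u'\<bar>"
    by (simp add: sumn_def power_add)
  finally show ?case using ab by (simp add: beta_pair_app[OF q0] del: beta.simps)
qed (simp_all add: sumn_def)

lemma beta_I0_Ip: "even (length L) \<Longrightarrow> L \<noteq> [] \<Longrightarrow> \<forall>e\<in>set L. e \<ge> 0 \<Longrightarrow> last L \<ge> 1 \<Longrightarrow> I0 v \<Longrightarrow>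
   Ip (app (beta q L) v)"
proof (induction L rule: induct_list012)
  case (3 a b rest)
  have ab: "a \<ge> 0" "b \<ge> 0" using 3 by auto
  have "Ip (app (mat2_npow (sigma2 q) (nat b)) (app (beta q rest) v))"
  proof (cases "rest = []")
    case True
    then have "b \<ge> 1" using 3 by simp
    then show ?thesis using Bn_I0[OF q0 3(7), of "nat b"] True by simp
  next
    case False
    then have "Ip (app (beta q rest) v)" using 3 by auto
    then show ?thesis using Bn_Ip[OF q0] by blast
  qed
  then show ?case using ab An_Ip0[OF q0] by (simp add: beta_pair_app[OF q0] del: beta.simps)
qed simp_all

end

lemma I0_10: "I0 (1, 0)" by (simp add: I0_def)


lemma sharp_rho: "qrat_sharp q x = rho (app (beta q (cf_expansion x)) (1, 0))"
  by (simp add: qrat_sharp_def act_app)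

lemma flat_rho: "q < 1 \<Longrightarrow> qrat_flat q x = rho (app (beta q (cf_expansion x)) (1/(1-q), 1))"
proof -
  assume q: "q < 1"
  have "(1::real, 1 - q) = ((1 - q) * (1/(1-q)), (1-q) * 1)" using q by simp
  then have "app (beta q (cf_expansion x)) (1, 1 - q) =
     ((1 - q) * fst (app (beta q (cf_expansion x)) (1/(1-q), 1)), (1 - q) * snd (app (beta q (cf_expansion x)) (1/(1-q), 1)))"
    by (metis app_scale)
  then show ?thesis using q by (simp add: qrat_flat_def act_app rho_def)
qed

lemma pos_expansion:
  assumes "(w::rat) > 0"
  shows "posl (cf_expansion w) \<and> even (length (cf_expansion w)) \<and> cf_eval (cf_expansion w) = w"
proof -
  have v: "cf_valid (cf_expansion w)" "cf_eval (cf_expansion w) = w" using cf_exp_valid assms by auto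
  have e: "even (length (cf_expansion w))" using v by (simp add: cf_valid_iff)
  have "posl (cf_expansion w)"
  proof (rule ccontr)
    assume "\<not> posl (cf_expansion w)"
    then have "posl (map uminus (cf_expansion w))" using v by (auto simp: cf_valid_iff)
    then have "cf_eval (map uminus (cf_expansion w)) > 0" using posl_pos e by simp
    then show False using v assms by (simp add: cf_eval_uminus)
  qed
  then show ?thesis using v e by simp
qed

context
  fixes q :: real
  assumes q0: "0 < q" and q1: "q < 1"
begin

lemma K_ge1: "1/(1-q) \<ge> 1" using q0 q1 by simp

lemma fw_bounds:
  fixes w :: rat
  assumes w1: "w > 1"
  obtains c d where "c \<ge> 1" "d \<ge> 1" "real_of_int c \<ge> real_of_rat w - 1" "real_of_int c < real_of_rat w"
    "Ip (app (beta q (cf_expansion w)) (1,0))"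
    "0 \<le> qrat_sharp q w" "qrat_sharp q w \<le> 1/(1-q)"
    "\<bar>qrat_sharp q w - 1/(1-q)\<bar> \<le> q^(nat c) * (1/(1-q))"
    "c = 1 \<Longrightarrow> \<bar>qrat_sharp q w - 1\<bar> \<le> q^(nat d) \<and> real_of_int d \<ge> 1/(real_of_rat w - 1) - 1"
proof -
  let ?K = "1/(1-q)"
  define W where "W = cf_expansion w"
  have W: "posl W" "even (length W)" "cf_eval W = w" using pos_expansion[of w] w1 by (auto simp: W_def)
  obtain c d R where cdR: "W = c # d # R"
    using W(1,2) by (cases W rule: remdups_adj.cases) (auto simp: posl_def)
  have pR: "\<forall>e\<in>set R. e \<ge> 1" "d \<ge> 1" "c \<ge> 0" using W(1) cdR by (auto simp: posl_def)
  have eR: "even (length R)" using W(2) cdR by simp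
  have rng: "of_int c \<le> w" "w \<le> of_int c + 1" "of_int c < w"
    using posl_range[OF W(1)] W(3) cdR by auto
  have c1: "c \<ge> 1"
  proof -
    have "of_int c + 1 > (1::rat)" using rng w1 by linarith
    then show ?thesis by simp
  qed
  have cw: "real_of_int c \<ge> real_of_rat w - 1"
  proof -
    have "w - 1 \<le> of_int c" using rng by simp
    then have "real_of_rat (w - 1) \<le> real_of_rat (of_int c)" by (simp only: of_rat_less_eq)
    then show ?thesis by (simp add: of_rat_diff)
  qed
  have cw2: "real_of_int c < real_of_rat w"
  proof -
    have "real_of_rat (of_int c) < real_of_rat w" using rng(3) by (simp only: of_rat_less)
    then show ?thesis by simp
  qed
  define v0 where "v0 = app (beta q R) (1,0)"
  have v0: "I0 v0"
  proof (cases "R = []")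
    case True then show ?thesis by (simp add: v0_def I0_def)
  next
    case False
    have "last R \<ge> 1" using pR False by simp
    then have "Ip v0" unfolding v0_def
      using beta_I0_Ip[OF q0 eR False] pR I0_10 by force
    then show ?thesis by (rule Ip_I0)
  qed
  define u where "u = app (mat2_npow (sigma2 q) (nat d)) v0"
  have u: "Ip u" "rho u \<le> q^(nat d - 1)" "rho u \<ge> 0"
    using Bn_I0[OF q0 v0, of "nat d"] pR by (auto simp: u_def)
  have appW: "app (beta q W) (1,0) = app (mat2_npow (mat2_adj (sigma1 q)) (nat c)) u"
    using pR by (simp add: cdR u_def v0_def beta_pair_app[OF q0] del: beta.simps)
  have fw: "qrat_sharp q w = rho (app (beta q W) (1,0))" by (simp add: sharp_rho W_def)
  have IpW: "Ip (app (beta q W) (1,0))" using appW An_Ip0[OF q0 u(1)] by simp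
  have form: "qrat_sharp q w - ?K = q^(nat c) * (rho u - ?K)"
    using An_Ip[OF q0 q1 u(1), of "nat c"] fw appW by simp
  have "q^(nat d - 1) \<le> 1" using q0 q1 by (simp add: power_le_one)
  then have ru1: "rho u \<le> 1" using u(2) by linarith
  have ruK: "rho u \<le> ?K" using ru1 K_ge1 by linarith
  have qc: "0 < q^(nat c)" "q^(nat c) \<le> 1" using q0 q1 by (auto simp: power_le_one)
  have "q^(nat c) * (rho u - ?K) \<le> 0" using qc ruK by (simp add: mult_nonneg_nonpos)
  then have b1: "qrat_sharp q w \<le> ?K" using form by linarith
  have b2: "\<bar>qrat_sharp q w - ?K\<bar> \<le> q^(nat c) * ?K"
  proof -
    have "\<bar>qrat_sharp q w - ?K\<bar> = \<bar>q^(nat c) * (rho u - ?K)\<bar>" using form by simp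
    also have "\<dots> = q^(nat c) * \<bar>rho u - ?K\<bar>" using qc by (simp add: abs_mult)
    also have "\<bar>rho u - ?K\<bar> = ?K - rho u" using ruK by simp
    finally have "\<bar>qrat_sharp q w - ?K\<bar> = q^(nat c) * (?K - rho u)" .
    also have "\<dots> \<le> q^(nat c) * ?K" using u(3) qc by (intro mult_left_mono) auto
    finally show ?thesis .
  qed
  have b0: "0 \<le> qrat_sharp q w"
  proof -
    have "q^(nat c) * ?K \<le> 1 * ?K" using qc K_ge1 q1 by (intro mult_right_mono) auto
    then show ?thesis using b2 by linarith
  qed
  have b3: "\<bar>qrat_sharp q w - 1\<bar> \<le> q^(nat d) \<and> real_of_int d \<ge> 1/(real_of_rat w - 1) - 1" if "c = 1"
  proof
    have e1: "qrat_sharp q w = ?K + q * (rho u - ?K)" using form that by simp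
    have e2: "?K + q * (rho u - ?K) = q * rho u + ?K * (1 - q)" by (simp only: algebra_simps)
    have "qrat_sharp q w = q * rho u + ?K * (1 - q)" using e1 e2 by linarith
    moreover have "?K * (1 - q) = 1" using q1 by simp
    ultimately have f1: "qrat_sharp q w = q * rho u + 1" by simp
    have "q * rho u \<le> q * q^(nat d - 1)" using u(2) q0 by simp
    also have "\<dots> = q^(nat d)" using pR by (simp add: power_eq_if)
    finally show "\<bar>qrat_sharp q w - 1\<bar> \<le> q^(nat d)" using f1 u(3) q0 by simp
    have pdR: "posl (d # R)" using pR by (simp add: posl_Cons)
    have vr: "of_int d \<le> cf_eval (d # R)" "cf_eval (d # R) \<le> of_int d + 1"
      using posl_range[OF pdR] by auto
    have "w = 1 + 1 / cf_eval (d # R)" using W(3) cdR that by (simp add: cf_eval_cons)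
    then have "1 / (w - 1) = cf_eval (d # R)" by simp
    then have "1 / (w - 1) \<le> of_int d + 1" using vr by simp
    then have "real_of_rat (1 / (w - 1)) \<le> real_of_rat (of_int d + 1)" by (simp only: of_rat_less_eq)
    then show "real_of_int d \<ge> 1/(real_of_rat w - 1) - 1" by (simp add: of_rat_divide of_rat_diff of_rat_add)
  qed
  show ?thesis
    by (rule that[OF c1 pR(2) cw cw2 IpW[unfolded W_def] b0 b1 b2 b3])
qed

end


lemma decomp:
  fixes y :: rat and q :: real
  assumes q0: "0 < q"
  assumes P: "even (length P)" "\<forall>e\<in>set P. e \<ge> 0"
  assumes M: "beta 1 P = (p, p', r, r')"
  assumes y: "r * real_of_rat y < p" "(r + r') * real_of_rat y > p + p'"
  obtains w :: rat where "w > 1" "real_of_rat w = (r' * real_of_rat y - p') / (p - r * real_of_rat y)"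
    "qrat_sharp q y = rho (app (beta q P) (app (beta q (cf_expansion w)) (1,0)))"
proof -
  let ?y = "real_of_rat y"
  have det: "p * r' - p' * r = 1" using beta1_props[OF P(1)] M by (simp add: det2_def)
  have nn: "p \<ge> 0" "p' \<ge> 0" "r \<ge> 0" "r' \<ge> 0" using beta1_nn[OF P] M by (auto simp: nnmat_def)
  have int: "p \<in> \<int>" "p' \<in> \<int>" "r \<in> \<int>" "r' \<in> \<int>" using beta1_props[OF P(1)] M by (auto simp: intmat_def)
  define den where "den = p - r * ?y"
  have den: "den > 0" using y by (simp add: den_def)
  define wr where "wr = (r' * ?y - p') / den"
  have wr1: "wr > 1" using y den by (simp add: wr_def den_def field_simps)
  have "wr \<in> \<rat>" unfolding wr_def den_def using int
    by (intro Rats_divide Rats_diff Rats_mult) (auto intro: Ints_subset_Rats[THEN subsetD])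
  then obtain w where w: "real_of_rat w = wr" by (auto elim: Rats_cases)
  have w1: "w > 1" using wr1 w by (metis of_rat_1 of_rat_less)
  define W where "W = cf_expansion w"
  have W: "posl W" "even (length W)" "cf_eval W = w" using pos_expansion[of w] w1 by (auto simp: W_def)
  have Wne: "W \<noteq> []" using W by (simp add: posl_def)
  have Wentries: "\<forall>e\<in>set W. e \<ge> 0" "last W \<ge> 1"
  proof -
    obtain c T where cT: "W = c # T" using Wne by (cases W) auto
    have "T \<noteq> []" using W(2) cT by auto
    then show "\<forall>e\<in>set W. e \<ge> 0" "last W \<ge> 1" using W(1) cT by (auto simp: posl_def)
  qed
  have PW: "even (length (P @ W))" "P @ W \<noteq> []" "\<forall>e\<in>set (P @ W). e \<ge> 0" "last (P @ W) \<ge> 1"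
    using P W(2) Wne Wentries by auto
  define L where "L = nrm (P @ W)"
  have Lp: "L \<noteq> []" "\<forall>e\<in>set L. e \<ge> 0" "\<forall>e\<in>set (tl L). e \<ge> 1" "even (length L)"
    using nrm_props[OF PW(2,3,4)] PW(1) by (auto simp: L_def)
  have Lv: "cf_valid L"
  proof -
    have "posl L" using Lp by (cases L) (auto simp: posl_def)
    then show ?thesis using Lp(4) by (simp add: cf_valid_iff)
  qed
  obtain X Y where XY: "app (beta 1 W) (1,0) = (X, Y)" by (cases "app (beta 1 W) (1,0)")
  have XYp: "X > 0" "Y > 0" "wr = X / Y"
    using cf_beta1_pos[OF W(2) Wne Wentries] XY W(3) w by (auto simp: rho_def)
  have rpos: "r * wr + r' > 0"
  proof -
    have "r + r' > 0" using det nn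
      by (smt (verit, best) mult_eq_0_iff)
    moreover have "r * wr \<ge> r" using wr1 nn by (simp add: mult_le_cancel_left1)
    ultimately show ?thesis by linarith
  qed
  have "real_of_rat (cf_eval (P @ W)) = rho (app (beta 1 (P @ W)) (1,0))"
    using cf_beta1_pos[OF PW(1,2,3,4)] by simp
  also have "\<dots> = rho (app (beta 1 P) (X, Y))" by (simp add: beta_append[OF P(1)] app_mult XY)
  also have "\<dots> = (p * X + p' * Y) / (r * X + r' * Y)" by (simp add: M app_def rho_def)
  also have "\<dots> = (p * wr + p') / (r * wr + r')"
  proof -
    have X: "X = Y * wr" using XYp by simp
    have "(p * X + p' * Y) / (r * X + r' * Y) = (Y * (p * wr + p')) / (Y * (r * wr + r'))"
      by (simp add: X algebra_simps)
    also have "\<dots> = (p * wr + p') / (r * wr + r')" using XYp(2) by simp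
    finally show ?thesis .
  qed
  also have "\<dots> = ?y"
  proof -
    have "wr * den = r' * ?y - p'" using den by (simp add: wr_def)
    then have "p * wr + p' = ?y * (r * wr + r')" by (simp add: den_def algebra_simps)
    then show ?thesis using rpos by (simp add: field_simps)
  qed
  finally have "cf_eval (P @ W) = y" by (simp only: of_rat_eq_iff)
  then have cL: "cf_eval L = y" by (simp add: L_def cf_eval_nrm)
  have expy: "cf_expansion y = L" using cf_exp_eq[OF Lv] cL by simp
  have "qrat_sharp q y = rho (app (beta q L) (1,0))" by (simp add: sharp_rho expy)
  also have "\<dots> = rho (app (beta q (P @ W)) (1,0))"
    using beta_nrm[OF PW(3,1)] Lp(4) by (simp add: L_def)
  also have "\<dots> = rho (app (beta q P) (app (beta q W) (1,0)))"
    by (simp add: beta_append[OF P(1)] app_mult)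
  finally show ?thesis using that w1 w by (simp add: wr_def den_def W_def)
qed


lemma even_split: "even (length a) \<Longrightarrow> a \<noteq> [] \<Longrightarrow> \<exists>a0 c d. a = a0 @ [c, d] \<and> even (length a0)"
proof -
  assume e: "even (length a)" and ne: "a \<noteq> []"
  obtain d T where dT: "rev a = d # T" using ne by (cases "rev a") auto
  have "length (rev a) = Suc (length T)" using dT by simp
  then have la: "length a = Suc (length T)" by simp
  have "T \<noteq> []" using e la by auto
  then obtain c T' where cT: "T = c # T'" by (cases T) auto
  have "a = rev (rev a)" by simp
  also have "\<dots> = rev T' @ [c, d]" using dT cT by simp
  finally have "a = rev T' @ [c, d]" .
  moreover have "even (length (rev T'))" using e calculation by simp
  ultimately show ?thesis by blast
qed

lemma sigma2_10: "app (sigma2 q) (1, 0) = (1, 1)"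
  by (simp add: sigma2_def app_def)

lemma beta_dec_last:
  assumes "even (length a0)" "d \<ge> 1"
  shows "app (beta q (a0 @ [c, d])) (1, 0) = app (beta q (a0 @ [c, d - 1])) (1, 1)"
proof -
  have n: "nat d = Suc (nat (d - 1))" using assms(2) by simp
  have "app (mat2_ipow (sigma2 q) d) (1, 0) = app (mat2_ipow (sigma2 q) (d - 1)) (1, 1)"
    using assms(2) by (simp add: ipow_nonneg n npow_Suc_right app_mult sigma2_10 del: mat2_npow.simps)
  then show ?thesis by (simp add: beta_append[OF assms(1)] app_mult)
qed

context
  fixes q :: real
  assumes q0: "0 < q" and q1: "q < 1"
begin

lemma qpow_small: "\<exists>N::nat. q^N * (1/(1-q)) < e" if "e > 0"
proof -
  have "e * (1 - q) > 0" using that q1 by simp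
  from real_arch_pow_inv[OF this q1] obtain N where "q^N < e * (1 - q)" by blast
  then show ?thesis using q1 by (intro exI[of _ N]) (simp add: field_simps)
qed

lemma qpow_mono: "m \<ge> n \<Longrightarrow> q^m \<le> q^n"
  using q0 q1 by (simp add: power_decreasing)

lemma pos_left:
  fixes x :: rat
  assumes x: "x > 0" and e: "e > 0"
  shows "\<exists>\<delta>>0. \<forall>y::rat. real_of_rat x - \<delta> < real_of_rat y \<and> y < x \<longrightarrow>
           \<bar>qrat_sharp q y - qrat_flat q x\<bar> < e"
proof -
  let ?K = "1/(1-q)"
  define a where "a = cf_expansion x"
  have a: "posl a" "even (length a)" "cf_eval a = x" using pos_expansion[OF x] by (auto simp: a_def)
  have ane: "a \<noteq> []" using a by (simp add: posl_def)
  have aent: "\<forall>e\<in>set a. e \<ge> 0" "last a \<ge> 1"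
  proof -
    obtain c T where cT: "a = c # T" using ane by (cases a) auto
    have "T \<noteq> []" using a(2) cT by auto
    then show "\<forall>e\<in>set a. e \<ge> 0" "last a \<ge> 1" using a(1) cT by (auto simp: posl_def)
  qed
  obtain p p' r r' where M: "beta 1 a = (p, p', r, r')" by (cases "beta 1 a") auto
  have det: "p * r' - p' * r = 1" using beta1_props[OF a(2)] M by (simp add: det2_def)
  have nn: "p \<ge> 0" "p' \<ge> 0" "r \<ge> 0" "r' \<ge> 0" using beta1_nn[OF a(2) aent(1)] M by (auto simp: nnmat_def)
  have cl: "fst (app (beta 1 a) (1,0)) > 0 \<and> snd (app (beta 1 a) (1,0)) > 0 \<and>
      real_of_rat (cf_eval a) = rho (app (beta 1 a) (1,0))"
    using cf_beta1_pos[OF a(2) ane aent] .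
  have pr: "p > 0" "r > 0" "real_of_rat x = p / r" using cl a(3) by (auto simp: M app_def rho_def)
  obtain N where N: "q^N * ?K < e" using qpow_small e by blast
  define m :: real where "m = real N + 2"
  have m: "m \<ge> 2" by (simp add: m_def)
  define z where "z = (p' + m * p) / (r' + m * r)"
  have "m * r > 0" using pr m by simp
  then have dz: "r' + m * r > 0" using nn by linarith
  have zx: "z < real_of_rat x"
  proof -
    have h1: "r * (p' + m * p) < p * (r' + m * r)" using det by (simp add: algebra_simps)
    have h2: "z * (r' + m*r) = p' + m*p" using dz by (simp add: z_def)
    have "(z * r) * (r' + m*r) = r * (z * (r' + m*r))" by (simp add: algebra_simps)
    also have "\<dots> = r * (p' + m*p)" using h2 by simp
    also have "\<dots> < p * (r' + m*r)" by (rule h1)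
    finally have "(z * r) * (r' + m*r) < p * (r' + m*r)" .
    then have "z * r < p" using dz by (simp add: mult_less_cancel_right)
    then show ?thesis using pr by (simp add: pos_less_divide_eq)
  qed
  show ?thesis
  proof (intro exI[of _ "real_of_rat x - z"] conjI allI impI)
    show "real_of_rat x - z > 0" using zx by simp
    fix y :: rat
    assume yy: "real_of_rat x - (real_of_rat x - z) < real_of_rat y \<and> y < x"
    let ?y = "real_of_rat y"
    have y1: "z < ?y" "?y < real_of_rat x" using yy by (auto simp: of_rat_less)
    have c1: "r * ?y < p" using y1 pr by (simp add: field_simps)
    have c2: "(r' * ?y - p') \<ge> m * (p - r * ?y)"
    proof -
      have "p' + m * p < ?y * (r' + m * r)" using y1(1) dz by (simp add: z_def field_simps)
      then show ?thesis by (simp add: algebra_simps)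
    qed
    have c3: "(r + r') * ?y > p + p'"
    proof -
      have "m * (p - r * ?y) > p - r * ?y" using m c1 by (simp add: mult_less_cancel_right1)
      then show ?thesis using c2 by (simp add: algebra_simps)
    qed
    obtain w where w: "w > 1" "real_of_rat w = (r' * ?y - p') / (p - r * ?y)"
      "qrat_sharp q y = rho (app (beta q a) (app (beta q (cf_expansion w)) (1,0)))"
      using decomp[OF q0 a(2) aent(1) M c1 c3] by blast
    have wm: "real_of_rat w \<ge> m" using w(2) c1 c2 by (simp add: le_divide_eq)
    obtain c d where cd: "c \<ge> 1" "real_of_int c \<ge> real_of_rat w - 1"
      "Ip (app (beta q (cf_expansion w)) (1,0))" "\<bar>qrat_sharp q w - ?K\<bar> \<le> q^(nat c) * ?K"
      using fw_bounds[OF q0 q1 w(1)] by metis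
    have cN: "nat c \<ge> N" using cd(2) wm unfolding m_def by linarith
    have gx: "qrat_flat q x = rho (app (beta q a) (?K, 1))" using flat_rho[OF q1] by (simp add: a_def)
    have IpK: "Ip (?K, 1)" using q1 by (simp add: Ip_def)
    have fw: "qrat_sharp q w = rho (app (beta q (cf_expansion w)) (1,0))" by (simp add: sharp_rho)
    have "\<bar>qrat_sharp q y - qrat_flat q x\<bar> \<le> q ^ sumn a * \<bar>qrat_sharp q w - ?K\<bar>"
      using beta_lip[OF q0 a(2) aent(1) cd(3) IpK] w(3) gx fw by (simp add: rho_def)
    also have "\<dots> \<le> 1 * \<bar>qrat_sharp q w - ?K\<bar>"
      using q0 q1 by (intro mult_right_mono) (auto simp: power_le_one)
    also have "\<dots> \<le> q^(nat c) * ?K" using cd(4) by simp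
    also have "\<dots> \<le> q^N * ?K" using qpow_mono[OF cN] q1 by (intro mult_right_mono) auto
    also have "\<dots> < e" by (rule N)
    finally show "\<bar>qrat_sharp q y - qrat_flat q x\<bar> < e" .
  qed
qed

end


context
  fixes q :: real
  assumes q0: "0 < q" and q1: "q < 1"
begin

lemma pos_right:
  fixes x :: rat
  assumes x: "x > 0" and e: "e > 0"
  shows "\<exists>\<delta>>0. \<forall>y::rat. x < y \<and> real_of_rat y < real_of_rat x + \<delta> \<longrightarrow>
           \<bar>qrat_sharp q y - qrat_sharp q x\<bar> < e"
proof -
  let ?K = "1/(1-q)"
  let ?x = "real_of_rat x"
  define a where "a = cf_expansion x"
  have a: "posl a" "even (length a)" "cf_eval a = x" using pos_expansion[OF x] by (auto simp: a_def)
  have ane: "a \<noteq> []" using a by (simp add: posl_def)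
  have aent: "\<forall>e\<in>set a. e \<ge> 0" "last a \<ge> 1"
  proof -
    obtain c T where cT: "a = c # T" using ane by (cases a) auto
    have "T \<noteq> []" using a(2) cT by auto
    then show "\<forall>e\<in>set a. e \<ge> 0" "last a \<ge> 1" using a(1) cT by (auto simp: posl_def)
  qed
  obtain a0 c d where acd: "a = a0 @ [c, d]" "even (length a0)" using even_split[OF a(2) ane] by blast
  have cd: "c \<ge> 0" "d \<ge> 1" "\<forall>e\<in>set a0. e \<ge> 0" using aent acd by auto
  define P where "P = a0 @ [c, d - 1]"
  have P: "even (length P)" "\<forall>e\<in>set P. e \<ge> 0" using acd cd by (auto simp: P_def)
  obtain p p' r r' where M: "beta 1 P = (p, p', r, r')" by (cases "beta 1 P") auto
  have det: "p * r' - p' * r = 1" using beta1_props[OF P(1)] M by (simp add: det2_def)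
  have nn: "p \<ge> 0" "p' \<ge> 0" "r \<ge> 0" "r' \<ge> 0" using beta1_nn[OF P] M by (auto simp: nnmat_def)
  have spos: "r + r' > 0"
  proof (rule ccontr)
    assume "\<not> r + r' > 0"
    then have "r = 0" "r' = 0" using nn by auto
    then show False using det by simp
  qed
  have xcl: "?x = (p + p') / (r + r')"
  proof -
    have "?x = rho (app (beta 1 a) (1,0))" using cf_beta1_pos[OF a(2) ane aent] a(3) by simp
    also have "\<dots> = rho (app (beta 1 P) (1,1))" using beta_dec_last[OF acd(2) cd(2)] by (simp add: acd P_def)
    finally show ?thesis by (simp add: M app_def rho_def)
  qed
  have fx: "qrat_sharp q x = rho (app (beta q P) (1,1))"
    using beta_dec_last[OF acd(2) cd(2), of q] by (simp add: sharp_rho a_def[symmetric] acd P_def)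
  obtain N where N: "q^N * ?K < e" using qpow_small[OF q0 q1] e by blast
  have qNe: "q^N < e"
  proof -
    have "q^N * 1 \<le> q^N * ?K" using q0 q1 by (intro mult_left_mono) auto
    then show ?thesis using N by simp
  qed
  define h :: real where "h = 1 / (real N + 2)"
  have h: "h > 0" "h < 1" "1 / h = real N + 2" by (auto simp: h_def)
  define D where "D = r' + (1 + h) * r"
  have "h * r \<ge> 0" using h nn by simp
  then have D: "D > 0" using spos by (simp add: D_def algebra_simps)
  define z where "z = (p' + (1 + h) * p) / D"
  have zD: "z * D = p' + (1 + h) * p" using D by (simp add: z_def)
  have xz: "?x < z"
  proof -
    have "(p + p') * D < (r + r') * (p' + (1 + h) * p)"
      using det h by (simp add: D_def algebra_simps)
    then have "(p + p') / (r + r') < (p' + (1 + h) * p) / D" using D spos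
      by (simp add: divide_less_eq less_divide_eq mult.commute)
    then show ?thesis using xcl by (simp add: z_def)
  qed
  have rz: "r * z < p"
  proof -
    have "r * z * D = r * (p' + (1 + h) * p)" using zD by (simp add: mult.assoc)
    also have "\<dots> < p * D" using det by (simp add: D_def algebra_simps)
    finally show ?thesis using D by simp
  qed
  show ?thesis
  proof (intro exI[of _ "z - ?x"] conjI allI impI)
    show "z - ?x > 0" using xz by simp
    fix y :: rat
    assume yy: "x < y \<and> real_of_rat y < ?x + (z - ?x)"
    let ?y = "real_of_rat y"
    have y1: "?x < ?y" "?y < z" using yy by (auto simp: of_rat_less)
    have c3: "(r + r') * ?y > p + p'" using y1(1) xcl spos by (simp add: divide_less_eq mult.commute)
    have "r * ?y \<le> r * z" using y1(2) nn by (intro mult_left_mono) auto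
    then have c1: "r * ?y < p" using rz by linarith
    obtain w where w: "w > 1" "real_of_rat w = (r' * ?y - p') / (p - r * ?y)"
      "qrat_sharp q y = rho (app (beta q P) (app (beta q (cf_expansion w)) (1,0)))"
      using decomp[OF q0 P M c1 c3] by blast
    have wh: "real_of_rat w - 1 \<le> h"
    proof -
      have "?y * D < z * D" using y1(2) D by (rule mult_strict_right_mono)
      then have "?y * D < p' + (1 + h) * p" using zD by simp
      then have "r' * ?y - p' \<le> (1 + h) * (p - r * ?y)" by (simp add: D_def algebra_simps)
      then have "real_of_rat w \<le> 1 + h" using w(2) c1 by (simp add: divide_le_eq)
      then show ?thesis by simp
    qed
    have w1: "real_of_rat w > 1" using w(1) by (simp add: of_rat_less[of 1, simplified])
    obtain cw dw where cwd: "cw \<ge> 1" "dw \<ge> 1" "real_of_int cw < real_of_rat w"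
      "Ip (app (beta q (cf_expansion w)) (1,0))"
      "cw = 1 \<Longrightarrow> \<bar>qrat_sharp q w - 1\<bar> \<le> q^(nat dw) \<and> real_of_int dw \<ge> 1/(real_of_rat w - 1) - 1"
      using fw_bounds[OF q0 q1 w(1)] by metis
    have cw1: "cw = 1" using cwd(1,3) wh h by linarith
    have dwb: "\<bar>qrat_sharp q w - 1\<bar> \<le> q^(nat dw)" "real_of_int dw \<ge> 1/(real_of_rat w - 1) - 1"
      using cwd(5)[OF cw1] by auto
    have "1/(real_of_rat w - 1) \<ge> 1 / h" using wh w1 h by (intro divide_left_mono) auto
    then have "real_of_int dw \<ge> real N + 1" using dwb(2) h(3) by linarith
    then have dN: "nat dw \<ge> N" by linarith
    have Ip11: "Ip (1, 1)" by (simp add: Ip_def)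
    have fw: "qrat_sharp q w = rho (app (beta q (cf_expansion w)) (1,0))" by (simp add: sharp_rho)
    have "\<bar>qrat_sharp q y - qrat_sharp q x\<bar> \<le> q ^ sumn P * \<bar>qrat_sharp q w - 1\<bar>"
      using beta_lip[OF q0 P cwd(4) Ip11] w(3) fx fw by (simp add: rho_def)
    also have "\<dots> \<le> 1 * \<bar>qrat_sharp q w - 1\<bar>"
      using q0 q1 by (intro mult_right_mono) (auto simp: power_le_one)
    also have "\<dots> \<le> q^(nat dw)" using dwb(1) by simp
    also have "\<dots> \<le> q^N" using qpow_mono[OF q0 q1 dN] .
    also have "\<dots> < e" by (rule qNe)
    finally show "\<bar>qrat_sharp q y - qrat_sharp q x\<bar> < e" .
  qed
qed

end


lemma cf_step:
  fixes tau :: real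
  assumes t0: "tau > 0" and ti: "tau \<notin> \<rat>"
  shows "\<exists>c d tau'. c \<ge> 0 \<and> d \<ge> 1 \<and> tau' > 1 \<and> tau' \<notin> \<rat> \<and>
     app (beta 1 [c, d]) (tau', 1) = (tau' + of_int c * (of_int d * tau' + 1), of_int d * tau' + 1) \<and>
     tau = (tau' + of_int c * (of_int d * tau' + 1)) / (of_int d * tau' + 1)"
proof -
  define c where "c = \<lfloor>tau\<rfloor>"
  define f where "f = tau - of_int c"
  have c0: "c \<ge> 0" using t0 by (simp add: c_def)
  have f01: "0 \<le> f" "f < 1" by (simp_all add: f_def c_def) linarith
  have fnz: "f \<noteq> 0"
  proof
    assume "f = 0"
    then have "tau = of_int c" by (simp add: f_def)
    then show False using ti by simp
  qed
  define u where "u = 1 / f"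
  have u1: "u > 1" using f01 fnz by (simp add: u_def)
  have ui: "u \<notin> \<rat>"
  proof
    assume "u \<in> \<rat>"
    moreover have "f = 1 / u" using fnz by (simp add: u_def)
    ultimately have "f \<in> \<rat>" by simp
    moreover have "tau = f + of_int c" by (simp add: f_def)
    ultimately have "tau \<in> \<rat>" by simp
    then show False using ti by simp
  qed
  define d where "d = \<lfloor>u\<rfloor>"
  have d1: "d \<ge> 1" using u1 by (simp add: d_def)
  define g where "g = u - of_int d"
  have g01: "0 \<le> g" "g < 1" by (simp_all add: g_def d_def) linarith
  have gnz: "g \<noteq> 0"
  proof
    assume "g = 0"
    then have "u = of_int d" by (simp add: g_def)
    then show False using ui by simp
  qed
  define tau' where "tau' = 1 / g"
  have t1: "tau' > 1" using g01 gnz by (simp add: tau'_def)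
  have tip: "tau' \<notin> \<rat>"
  proof
    assume "tau' \<in> \<rat>"
    moreover have "g = 1 / tau'" using gnz by (simp add: tau'_def)
    ultimately have "g \<in> \<rat>" by simp
    moreover have "u = g + of_int d" by (simp add: g_def)
    ultimately have "u \<in> \<rat>" by simp
    then show False using ui by simp
  qed
  have app: "app (beta 1 [c, d]) (tau', 1) = (tau' + of_int c * (of_int d * tau' + 1), of_int d * tau' + 1)"
    using app_beta1_pair[of "[]" "(tau', 1)" tau' 1 c d] by simp
  have "of_int d * tau' > 0" using d1 t1 by simp
  then have dpos: "of_int d * tau' + 1 > 0" by linarith
  have "(tau' + of_int c * (of_int d * tau' + 1)) / (of_int d * tau' + 1) = of_int c + tau' / (of_int d * tau' + 1)"
    using dpos by (simp add: field_simps)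
  also have "tau' / (of_int d * tau' + 1) = 1 / (of_int d + 1 / tau')"
    using t1 dpos by (simp add: field_simps)
  also have "of_int d + 1 / tau' = u" using gnz by (simp add: tau'_def g_def)
  also have "1 / u = f" using fnz by (simp add: u_def)
  finally have "tau = (tau' + of_int c * (of_int d * tau' + 1)) / (of_int d * tau' + 1)"
    by (simp add: f_def)
  then show ?thesis using c0 d1 t1 tip app by blast
qed


lemma step_compose:
  assumes P: "even (length P)" and st: "c \<ge> 0" "d \<ge> 1" "tau' > 1"
    "app (beta 1 [c, d]) (tau', 1) = (tau' + of_int c * (of_int d * tau' + 1), of_int d * tau' + 1)"
    "tau = (tau' + of_int c * (of_int d * tau' + 1)) / (of_int d * tau' + 1)"
  shows "rho (app (beta 1 (P @ [c, d])) (tau', 1)) = rho (app (beta 1 P) (tau, 1))"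
proof -
  define Y where "Y = of_int d * tau' + 1"
  have "of_int d * tau' > 0" using st by simp
  then have Y: "Y > 0" by (simp add: Y_def)
  have "app (beta 1 [c, d]) (tau', 1) = (Y * tau, Y * 1)" using st(4,5) Y by (simp add: Y_def)
  then have "app (beta 1 (P @ [c, d])) (tau', 1) = app (beta 1 P) (Y * tau, Y * 1)"
    by (simp add: beta_append[OF P] app_mult del: beta.simps)
  also have "\<dots> = (Y * fst (app (beta 1 P) (tau, 1)), Y * snd (app (beta 1 P) (tau, 1)))"
    by (rule app_scale)
  finally show ?thesis using Y by (simp add: rho_def)
qed

lemma cf_approx:
  fixes t :: real
  assumes t0: "t > 0" and ti: "t \<notin> \<rat>"
  shows "\<exists>P tau. even (length P) \<and> (\<forall>e\<in>set P. e \<ge> 0) \<and> sumn P \<ge> N \<and> tau > 0 \<and> tau \<notin> \<rat> \<and>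
     t = rho (app (beta 1 P) (tau, 1))"
proof (induction N)
  case 0
  show ?case by (rule exI[of _ "[]"], rule exI[of _ t]) (use t0 ti in \<open>simp add: rho_def\<close>)
next
  case (Suc N)
  then obtain P tau where P: "even (length P)" "\<forall>e\<in>set P. e \<ge> 0" "sumn P \<ge> N" "tau > 0" "tau \<notin> \<rat>"
    "t = rho (app (beta 1 P) (tau, 1))" by blast
  obtain c d tau' where st: "c \<ge> 0" "d \<ge> 1" "tau' > 1" "tau' \<notin> \<rat>"
    "app (beta 1 [c, d]) (tau', 1) = (tau' + of_int c * (of_int d * tau' + 1), of_int d * tau' + 1)"
    "tau = (tau' + of_int c * (of_int d * tau' + 1)) / (of_int d * tau' + 1)"
    using cf_step[OF P(4,5)] by blast
  have "sumn (P @ [c, d]) = sumn P + nat c + nat d" by (simp add: sumn_def)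
  then have "sumn (P @ [c, d]) \<ge> Suc N" using P(3) st(2) by linarith
  moreover have "t = rho (app (beta 1 (P @ [c, d])) (tau', 1))"
    using step_compose[OF P(1) st(1,2,3,5,6)] P(6) by simp
  ultimately show ?case using P(1,2) st by (intro exI[of _ "P @ [c, d]"] exI[of _ tau']) auto
qed

lemma cf_approx1:
  fixes t :: real
  assumes t0: "t > 0" and ti: "t \<notin> \<rat>"
  shows "\<exists>P tau. even (length P) \<and> (\<forall>e\<in>set P. e \<ge> 0) \<and> sumn P \<ge> N \<and> tau > 1 \<and>
     t = rho (app (beta 1 P) (tau, 1))"
proof -
  obtain P tau where P: "even (length P)" "\<forall>e\<in>set P. e \<ge> 0" "sumn P \<ge> N" "tau > 0" "tau \<notin> \<rat>"
    "t = rho (app (beta 1 P) (tau, 1))" using cf_approx[OF t0 ti, of N] by blast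
  obtain c d tau' where st: "c \<ge> 0" "d \<ge> 1" "tau' > 1" "tau' \<notin> \<rat>"
    "app (beta 1 [c, d]) (tau', 1) = (tau' + of_int c * (of_int d * tau' + 1), of_int d * tau' + 1)"
    "tau = (tau' + of_int c * (of_int d * tau' + 1)) / (of_int d * tau' + 1)"
    using cf_step[OF P(4,5)] by blast
  have "sumn (P @ [c, d]) = sumn P + nat c + nat d" by (simp add: sumn_def)
  then have "sumn (P @ [c, d]) \<ge> N" using P(3) by linarith
  moreover have "t = rho (app (beta 1 (P @ [c, d])) (tau', 1))"
    using step_compose[OF P(1) st(1,2,3,5,6)] P(6) by simp
  ultimately show ?thesis using P(1,2) st by (intro exI[of _ "P @ [c, d]"] exI[of _ tau']) auto
qed


context
  fixes q :: real
  assumes q0: "0 < q" and q1: "q < 1"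
begin

lemma irr_cauchy:
  fixes t :: real
  assumes t0: "t > 0" and ti: "t \<notin> \<rat>" and e: "e > 0"
  shows "\<exists>\<delta>>0. \<forall>y y'::rat. \<bar>real_of_rat y - t\<bar> < \<delta> \<and> \<bar>real_of_rat y' - t\<bar> < \<delta> \<longrightarrow>
           \<bar>qrat_sharp q y - qrat_sharp q y'\<bar> < e"
proof -
  let ?K = "1/(1-q)"
  obtain N where N: "q^N * ?K < e" using qpow_small[OF q0 q1] e by blast
  obtain P tau where P: "even (length P)" "\<forall>e\<in>set P. e \<ge> 0" "sumn P \<ge> N" "tau > 1"
    "t = rho (app (beta 1 P) (tau, 1))" using cf_approx1[OF t0 ti, of N] by blast
  obtain p p' r r' where M: "beta 1 P = (p, p', r, r')" by (cases "beta 1 P") auto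
  have det: "p * r' - p' * r = 1" using beta1_props[OF P(1)] M by (simp add: det2_def)
  have nn: "p \<ge> 0" "p' \<ge> 0" "r \<ge> 0" "r' \<ge> 0" using beta1_nn[OF P(1,2)] M by (auto simp: nnmat_def)
  have spos: "r + r' > 0"
  proof (rule ccontr)
    assume "\<not> r + r' > 0"
    then have "r = 0" "r' = 0" using nn by auto
    then show False using det by simp
  qed
  define D where "D = r * tau + r'"
  have "r * tau \<ge> r" using P(4) nn by (simp add: mult_le_cancel_left1)
  then have D: "D > 0" using spos by (simp add: D_def)
  have tD: "t * D = p * tau + p'" using P(5) D by (simp add: M app_def rho_def D_def)
  define A where "A = p - r * t"
  define B where "B = (r + r') * t - (p + p')"
  have AD: "A * D = 1"
  proof -
    have "A * D = p * D - r * (t * D)" by (simp add: A_def algebra_simps)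
    also have "\<dots> = p * (r * tau + r') - r * (p * tau + p')" by (subst tD) (simp only: D_def)
    also have "\<dots> = p * r' - p' * r" by (simp add: algebra_simps)
    also have "\<dots> = 1" by (rule det)
    finally show ?thesis .
  qed
  have BD: "B * D = tau - 1"
  proof -
    have "B * D = (r + r') * (t * D) - (p + p') * D" by (simp add: B_def algebra_simps)
    also have "\<dots> = (r + r') * (p * tau + p') - (p + p') * (r * tau + r')" by (subst tD) (simp only: D_def)
    also have "\<dots> = (tau - 1) * (p * r' - p' * r)" by (simp add: algebra_simps)
    finally show ?thesis using det by simp
  qed
  have A: "A > 0" using AD D by (metis mult_pos_pos zero_less_mult_pos2 zero_less_one)
  have B: "B > 0" using BD D P(4) by (metis diff_gt_0_iff_gt zero_less_mult_pos2)
  define \<delta> where "\<delta> = min (A / (r + 1)) (B / (r + r' + 1))"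
  have dpos: "\<delta> > 0" using A B nn by (simp add: \<delta>_def)
  have good: "r * real_of_rat y < p \<and> (r + r') * real_of_rat y > p + p'"
    if "\<bar>real_of_rat y - t\<bar> < \<delta>" for y :: rat
  proof
    let ?y = "real_of_rat y"
    have "r * \<bar>?y - t\<bar> \<le> r * (A / (r + 1))" using that nn by (intro mult_left_mono) (auto simp: \<delta>_def)
    also have "\<dots> < A" using A nn by (simp add: field_simps)
    finally have "r * \<bar>?y - t\<bar> < A" .
    moreover have "r * (?y - t) \<le> r * \<bar>?y - t\<bar>" using nn by (intro mult_left_mono) auto
    ultimately show "r * ?y < p" by (simp add: A_def algebra_simps)
    have "(r + r') * \<bar>?y - t\<bar> \<le> (r + r') * (B / (r + r' + 1))" using that nn
      by (intro mult_left_mono) (auto simp: \<delta>_def)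
    also have "\<dots> < B" using B spos by (simp add: field_simps)
    finally have "(r + r') * \<bar>?y - t\<bar> < B" .
    moreover have "(r + r') * (t - ?y) \<le> (r + r') * \<bar>?y - t\<bar>" using nn by (intro mult_left_mono) auto
    ultimately show "(r + r') * ?y > p + p'" by (simp add: B_def algebra_simps)
  qed
  have val: "\<exists>v. Ip v \<and> 0 \<le> rho v \<and> rho v \<le> ?K \<and> qrat_sharp q y = rho (app (beta q P) v)"
    if "\<bar>real_of_rat y - t\<bar> < \<delta>" for y :: rat
  proof -
    from good[OF that] have g: "r * real_of_rat y < p" "(r + r') * real_of_rat y > p + p'" by auto
    obtain w where w: "w > 1" "qrat_sharp q y = rho (app (beta q P) (app (beta q (cf_expansion w)) (1,0)))"
      using decomp[OF q0 P(1,2) M g] by blast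
    obtain c d where "Ip (app (beta q (cf_expansion w)) (1,0))"
      "0 \<le> qrat_sharp q w" "qrat_sharp q w \<le> ?K"
      using fw_bounds[OF q0 q1 w(1)] by metis
    then show ?thesis using w(2) by (intro exI[of _ "app (beta q (cf_expansion w)) (1,0)"]) (simp add: sharp_rho)
  qed
  show ?thesis
  proof (intro exI[of _ \<delta>] conjI allI impI)
    show "\<delta> > 0" by (rule dpos)
    fix y y' :: rat
    assume yy: "\<bar>real_of_rat y - t\<bar> < \<delta> \<and> \<bar>real_of_rat y' - t\<bar> < \<delta>"
    obtain v where v: "Ip v" "0 \<le> rho v" "rho v \<le> ?K" "qrat_sharp q y = rho (app (beta q P) v)"
      using val yy by blast
    obtain v' where v': "Ip v'" "0 \<le> rho v'" "rho v' \<le> ?K" "qrat_sharp q y' = rho (app (beta q P) v')"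
      using val yy by blast
    have "\<bar>qrat_sharp q y - qrat_sharp q y'\<bar> \<le> q ^ sumn P * \<bar>rho v - rho v'\<bar>"
      using beta_lip[OF q0 P(1,2) v(1) v'(1)] v(4) v'(4) by simp
    also have "\<dots> \<le> q ^ N * ?K"
      using qpow_mono[OF q0 q1 P(3)] v v' q0 by (intro mult_mono) auto
    also have "\<dots> < e" by (rule N)
    finally show "\<bar>qrat_sharp q y - qrat_sharp q y'\<bar> < e" .
  qed
qed

end


definition Dl :: "real \<Rightarrow> mat2" where "Dl q = (0, -1/q^2, 1/q, 0)"

context
  fixes q :: real
  assumes q0: "0 < q"
begin

lemma conj1: "mat2_mult (Dl q) (sigma1 q) = mat2_mult (sigma2 q) (Dl q)"
  using q0 by (simp add: Dl_def sigma1_def sigma2_def mat2_mult_def field_simps power2_eq_square)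
lemma conj2: "mat2_mult (Dl q) (sigma2 q) = mat2_mult (sigma1 q) (Dl q)"
  using q0 by (simp add: Dl_def sigma1_def sigma2_def mat2_mult_def field_simps power2_eq_square)
lemma conj3: "mat2_mult (Dl q) (mat2_adj (sigma1 q)) = mat2_mult (mat2_adj (sigma2 q)) (Dl q)"
  using q0 by (simp add: Dl_def sigma1_def sigma2_def mat2_mult_def mat2_adj_def field_simps power2_eq_square)
lemma conj4: "mat2_mult (Dl q) (mat2_adj (sigma2 q)) = mat2_mult (mat2_adj (sigma1 q)) (Dl q)"
  using q0 by (simp add: Dl_def sigma1_def sigma2_def mat2_mult_def mat2_adj_def field_simps power2_eq_square)

lemma conj_npow: "mat2_mult D M = mat2_mult N D \<Longrightarrow> mat2_mult D (mat2_npow M n) = mat2_mult (mat2_npow N n) D"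
proof (induction n)
  case 0 then show ?case by simp
next
  case (Suc n)
  have "mat2_mult D (mat2_npow M (Suc n)) = mat2_mult (mat2_mult D M) (mat2_npow M n)"
    by (simp add: mult_assoc)
  also have "\<dots> = mat2_mult N (mat2_mult D (mat2_npow M n))" using Suc.prems by (simp add: mult_assoc)
  also have "\<dots> = mat2_mult (mat2_npow N (Suc n)) D" using Suc by (simp add: mult_assoc)
  finally show ?case .
qed

lemma conj_ipow1: "mat2_mult (Dl q) (mat2_ipow (sigma1 q) k) = mat2_mult (mat2_ipow (sigma2 q) k) (Dl q)"
  by (simp add: mat2_ipow_def conj_npow[OF conj1] conj_npow[OF conj3])
lemma conj_ipow2: "mat2_mult (Dl q) (mat2_ipow (sigma2 q) k) = mat2_mult (mat2_ipow (sigma1 q) k) (Dl q)"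
  by (simp add: mat2_ipow_def conj_npow[OF conj2] conj_npow[OF conj4])

lemma conj_Wd: "mat2_mult (Dl q) (Wd q b l) = mat2_mult (Wd q (\<not> b) (map uminus l)) (Dl q)"
proof (induction l arbitrary: b)
  case Nil then show ?case by simp
next
  case (Cons k l)
  show ?case
  proof (cases b)
    case True
    have "mat2_mult (Dl q) (Wd q b (k # l)) = mat2_mult (mat2_mult (Dl q) (mat2_ipow (sigma1 q) (-k))) (Wd q False l)"
      using True by (simp add: mult_assoc)
    also have "\<dots> = mat2_mult (mat2_ipow (sigma2 q) (-k)) (mat2_mult (Dl q) (Wd q False l))"
      by (simp add: conj_ipow1 mult_assoc)
    also have "\<dots> = mat2_mult (Wd q (\<not> b) (map uminus (k # l))) (Dl q)"
      using True Cons[of False] by (simp add: mult_assoc)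
    finally show ?thesis .
  next
    case False
    have "mat2_mult (Dl q) (Wd q b (k # l)) = mat2_mult (mat2_mult (Dl q) (mat2_ipow (sigma2 q) k)) (Wd q True l)"
      using False by (simp add: mult_assoc)
    also have "\<dots> = mat2_mult (mat2_ipow (sigma1 q) k) (mat2_mult (Dl q) (Wd q True l))"
      by (simp add: conj_ipow2 mult_assoc)
    also have "\<dots> = mat2_mult (Wd q (\<not> b) (map uminus (k # l))) (Dl q)"
      using False Cons[of True] by (simp add: mult_assoc)
    finally show ?thesis .
  qed
qed

lemma det_Dl: "det2 (Dl q) = 1 / q^3"
  using q0 by (simp add: Dl_def det2_def field_simps power3_eq_cube power2_eq_square)

lemma left_id: "mat2_mult (mat2_mult (sigma2 q) (sigma1 q)) (Dl q) = smult2 (-1/q^2) (mat2_adj (sigma1 q))"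
  using q0 by (simp add: Dl_def sigma1_def sigma2_def mat2_mult_def mat2_adj_def smult2_def field_simps power2_eq_square)
lemma right_id: "mat2_mult (mat2_adj (Dl q)) (mat2_mult (sigma1 q) (sigma2 q)) = smult2 (1/q^2) (mat2_adj (sigma1 q))"
  using q0 by (simp add: Dl_def sigma1_def sigma2_def mat2_mult_def mat2_adj_def smult2_def field_simps power2_eq_square)

lemma det_s1: "det2 (sigma1 q) = 1/q"
  by (simp add: sigma1_def det2_def)

lemma Wd_conj_form: "Wd q True (map uminus l) = smult2 (q^3) (mat2_mult (Dl q) (mat2_mult (Wd q False l) (mat2_adj (Dl q))))"
proof -
  have "mat2_mult (Wd q True (map uminus l)) (mat2_mult (Dl q) (mat2_adj (Dl q))) =
      mat2_mult (mat2_mult (Dl q) (Wd q False l)) (mat2_adj (Dl q))"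
    using conj_Wd[of False l] by (simp add: mult_assoc)
  then have "smult2 (1/q^3) (Wd q True (map uminus l)) = mat2_mult (Dl q) (mat2_mult (Wd q False l) (mat2_adj (Dl q)))"
    by (simp add: mult_adj det_Dl mult_smult_right mult_assoc)
  then have "smult2 (q^3) (smult2 (1/q^3) (Wd q True (map uminus l))) = smult2 (q^3) (mat2_mult (Dl q) (mat2_mult (Wd q False l) (mat2_adj (Dl q))))"
    by simp
  then show ?thesis using q0 by (simp add: smult2_smult2)
qed

end


fun dec_first :: "int list \<Rightarrow> int list" where
  "dec_first [] = []"
| "dec_first (k # l) = (k - 1) # l"

definition dec_last :: "int list \<Rightarrow> int list" where
  "dec_last l = butlast l @ [last l - 1]"

lemma length_dec_first[simp]: "length (dec_first l) = length l"
  by (cases l) auto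
lemma length_dec_last[simp]: "l \<noteq> [] \<Longrightarrow> length (dec_last l) = length l"
  by (simp add: dec_last_def)

context
  fixes q :: real
  assumes q0: "0 < q"
begin

lemma detq: "det2 (sigma1 q) \<noteq> 0" using q0 by (simp add: det_s1)

lemma W_dec_first: "C \<noteq> [] \<Longrightarrow> \<exists>s. s \<noteq> 0 \<and> Wd q True (dec_first C) = smult2 s (mat2_mult (sigma1 q) (Wd q True C))"
proof -
  assume "C \<noteq> []"
  then obtain k l where C: "C = k # l" by (cases C) auto
  obtain s where s: "s \<noteq> 0" "mat2_mult (sigma1 q) (mat2_ipow (sigma1 q) (-k)) = smult2 s (mat2_ipow (sigma1 q) (-k + 1))"
    using ipow_shift_left[OF detq] by blast
  have "mat2_ipow (sigma1 q) (-(k - 1)) = smult2 (1/s) (mat2_mult (sigma1 q) (mat2_ipow (sigma1 q) (-k)))"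
    using s by (simp add: smult2_smult2)
  then have "Wd q True (dec_first C) = smult2 (1/s) (mat2_mult (sigma1 q) (Wd q True C))"
    by (simp add: C mult_smult_left mult_assoc)
  then show ?thesis using s(1) by (intro exI[of _ "1/s"]) simp
qed

lemma W_dec_last: "odd (length C) \<Longrightarrow> \<exists>s. s \<noteq> 0 \<and> Wd q True (dec_last C) = smult2 s (mat2_mult (Wd q True C) (sigma1 q))"
proof -
  assume o: "odd (length C)"
  then have ne: "C \<noteq> []" by auto
  define l0 where "l0 = butlast C"
  define m where "m = last C"
  have C: "C = l0 @ [m]" using ne by (simp add: l0_def m_def)
  have e0: "even (length l0)" using o C by simp
  obtain s where s: "s \<noteq> 0" "mat2_mult (mat2_ipow (sigma1 q) (-m)) (sigma1 q) = smult2 s (mat2_ipow (sigma1 q) (-m + 1))"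
    using ipow_shift_right[OF detq] by blast
  have "mat2_ipow (sigma1 q) (-(m - 1)) = smult2 (1/s) (mat2_mult (mat2_ipow (sigma1 q) (-m)) (sigma1 q))"
    using s by (simp add: smult2_smult2)
  then have "Wd q True (dec_last C) = smult2 (1/s) (mat2_mult (Wd q True C) (sigma1 q))"
    using e0 by (simp add: dec_last_def C Wd_append mult_smult_right mult_assoc)
  then show ?thesis using s(1) by (intro exI[of _ "1/s"]) simp
qed

lemma hard_matrix:
  assumes o: "odd (length C)"
  shows "\<exists>s. s \<noteq> 0 \<and> beta q ([0, 1] @ dec_last (dec_first C) @ [1]) =
     smult2 s (mat2_mult (mat2_adj (sigma1 q)) (mat2_mult (beta q (0 # map uminus C)) (mat2_adj (sigma1 q))))"
proof -
  have ne: "C \<noteq> []" using o by auto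
  define X where "X = Wd q False (map uminus C)"
  have bY: "beta q (0 # map uminus C) = X"
    using o by (simp add: beta_Wd X_def del: beta.simps)
  have s2: "mat2_ipow (sigma2 q) 1 = sigma2 q" by (simp add: mat2_ipow_def)
  have o1: "odd (length (dec_first C))" using o by simp
  have o2: "odd (length (dec_last (dec_first C)))" using o1 ne by (cases C) auto
  have bL: "beta q ([0, 1] @ dec_last (dec_first C) @ [1]) =
      mat2_mult (sigma2 q) (mat2_mult (Wd q True (dec_last (dec_first C))) (sigma2 q))"
  proof -
    have ev: "even (length ([0, 1] @ dec_last (dec_first C) @ [1]))" using o2 by simp
    have "beta q ([0, 1] @ dec_last (dec_first C) @ [1]) = Wd q True ([0, 1] @ (dec_last (dec_first C) @ [1]))"
      by (rule beta_Wd[OF ev])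
    also have "\<dots> = mat2_mult (Wd q True [0, 1]) (Wd q True (dec_last (dec_first C) @ [1]))"
      by (subst Wd_append) simp
    also have "Wd q True [0, 1] = sigma2 q" by (simp add: s2)
    also have "Wd q True (dec_last (dec_first C) @ [1]) = mat2_mult (Wd q True (dec_last (dec_first C))) (sigma2 q)"
      using o2 by (subst Wd_append) (simp add: s2)
    finally show ?thesis .
  qed
  obtain s1 where s1: "s1 \<noteq> 0" "Wd q True (dec_first C) = smult2 s1 (mat2_mult (sigma1 q) (Wd q True C))"
    using W_dec_first[OF ne] by blast
  obtain s2 where s2': "s2 \<noteq> 0" "Wd q True (dec_last (dec_first C)) = smult2 s2 (mat2_mult (Wd q True (dec_first C)) (sigma1 q))"
    using W_dec_last[OF o1] by blast
  have WC: "Wd q True C = smult2 (q^3) (mat2_mult (Dl q) (mat2_mult X (mat2_adj (Dl q))))"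
    using Wd_conj_form[OF q0, of "map uminus C"] by (simp add: X_def comp_def)
  define A where "A = mat2_adj (sigma1 q)"
  have "beta q ([0, 1] @ dec_last (dec_first C) @ [1]) =
     smult2 (s2 * s1 * q^3) (mat2_mult (mat2_mult (mat2_mult (sigma2 q) (sigma1 q)) (Dl q))
        (mat2_mult X (mat2_mult (mat2_adj (Dl q)) (mat2_mult (sigma1 q) (sigma2 q)))))"
    unfolding bL by (simp add: s2'(2) s1(2) WC mult_smult_left mult_smult_right smult2_smult2 mult_assoc mult.commute mult.left_commute mult.assoc del: beta.simps)
  also have "\<dots> = smult2 (s2 * s1 * q^3 * (-1/q^2) * (1/q^2)) (mat2_mult A (mat2_mult X A))"
    by (simp add: left_id[OF q0] right_id[OF q0] mult_smult_left mult_smult_right smult2_smult2 A_def mult.commute mult.left_commute)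
  finally show ?thesis using s1(1) s2'(1) q0 by (intro exI[of _ "s2 * s1 * q^3 * (-1/q^2) * (1/q^2)"]) (simp add: bY A_def)
qed

end


definition In :: "real \<times> real \<Rightarrow> bool" where "In v \<longleftrightarrow> fst v > 0 \<and> snd v < 0"
definition I1 :: "real \<times> real \<Rightarrow> bool" where "I1 v \<longleftrightarrow> fst v > 0 \<and> snd v < fst v"

lemma In_I1: "In v \<Longrightarrow> I1 v" by (simp add: In_def I1_def)

context
  fixes q :: real
  assumes q0: "0 < q"
begin

lemma s1_In: "In v \<Longrightarrow> In (app (sigma1 q) v)"
  using q0 by (cases v) (simp add: In_def sigma1_def app_def field_simps)
lemma as2_I1: "I1 v \<Longrightarrow> In (app (mat2_adj (sigma2 q)) v)"
  using q0 by (cases v) (simp add: In_def I1_def sigma2_def mat2_adj_def app_def)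

lemma s1n_In: "In v \<Longrightarrow> In (app (mat2_npow (sigma1 q) n) v)"
  by (induction n) (simp_all add: app_mult s1_In)
lemma as2n_In: "I1 v \<Longrightarrow> n \<ge> 1 \<Longrightarrow> In (app (mat2_npow (mat2_adj (sigma2 q)) n) v)"
proof (induction n)
  case 0 then show ?case by simp
next
  case (Suc n)
  show ?case
  proof (cases "n = 0")
    case True then show ?thesis using Suc by (simp add: as2_I1)
  next
    case False
    then have "In (app (mat2_npow (mat2_adj (sigma2 q)) n) v)" using Suc by simp
    then show ?thesis by (simp add: app_mult as2_I1 In_I1)
  qed
qed

lemma beta_neg_vec: "even (length L) \<Longrightarrow> L \<noteq> [] \<Longrightarrow> hd L \<le> 0 \<Longrightarrow> \<forall>e\<in>set (tl L). e \<le> -1 \<Longrightarrow> I1 v \<Longrightarrow>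
   In (app (beta q L) v)"
proof (induction L rule: induct_list012)
  case (3 a b rest)
  have ab: "a \<le> 0" "b \<le> -1" using 3 by auto
  have v': "I1 (app (beta q rest) v)"
  proof (cases "rest = []")
    case True then show ?thesis using 3 by simp
  next
    case False
    have "hd rest \<le> 0" "\<forall>e\<in>set (tl rest). e \<le> -1" using 3(6) False by (cases rest; auto)+
    then show ?thesis using 3(1) 3(3) False 3(7) In_I1 by auto
  qed
  have e1: "mat2_ipow (sigma1 q) (-a) = mat2_npow (sigma1 q) (nat (-a))" using ab by (simp add: ipow_nonneg)
  have e2: "mat2_ipow (sigma2 q) b = mat2_npow (mat2_adj (sigma2 q)) (nat (-b))"
    using ab ipow_neg[of "-b" "sigma2 q"] by simp
  have "In (app (mat2_npow (mat2_adj (sigma2 q)) (nat (-b))) (app (beta q rest) v))"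
    using as2n_In[OF v'] ab by simp
  then show ?case by (simp add: app_mult e1 e2 s1n_In)
qed simp_all

lemma rhoA: "snd u \<noteq> 0 \<Longrightarrow> rho (app (mat2_adj (sigma1 q)) u) = q * rho u + 1"
  using q0 by (cases u) (simp add: adjs1 app_def rho_def field_simps)

lemma A_eig: "app (mat2_adj (sigma1 q)) (1, 0) = (1, 0)"
  "app (mat2_adj (sigma1 q)) (1, 1 - q) = (1/q * 1, 1/q * (1 - q))"
  using q0 by (simp_all add: adjs1 app_def field_simps)

lemma transfer_rho:
  assumes s: "s \<noteq> 0" and B: "B = mat2_id \<or> B = mat2_adj (sigma1 q)"
    and eq: "M' = smult2 s (mat2_mult (mat2_adj (sigma1 q)) (mat2_mult M B))"
    and v: "v = (1, 0) \<or> v = (1, 1 - q)"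
    and nz: "snd (app M v) \<noteq> 0"
  shows "rho (app M' v) = q * rho (app M v) + 1"
proof -
  have "\<exists>mu. mu \<noteq> 0 \<and> app B v = (mu * fst v, mu * snd v)"
  proof (cases "B = mat2_id")
    case True then show ?thesis by (intro exI[of _ 1]) simp
  next
    case False
    then have BA: "B = mat2_adj (sigma1 q)" using B by simp
    show ?thesis
    proof (cases "v = (1, 0)")
      case True then show ?thesis using BA A_eig by (intro exI[of _ 1]) simp
    next
      case False
      then have "v = (1, 1 - q)" using v by simp
      then show ?thesis using BA A_eig q0 by (intro exI[of _ "1/q"]) simp
    qed
  qed
  then obtain mu where mu: "mu \<noteq> 0" "app B v = (mu * fst v, mu * snd v)" by blast
  have "app M' v = (s * fst (app (mat2_adj (sigma1 q)) (app M (mu * fst v, mu * snd v))),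
       s * snd (app (mat2_adj (sigma1 q)) (app M (mu * fst v, mu * snd v))))"
    by (simp add: eq app_smult2 app_mult mu(2))
  also have "app M (mu * fst v, mu * snd v) = (mu * fst (app M v), mu * snd (app M v))"
    by (metis app_scale prod.collapse)
  finally have "app M' v = (s * fst (app (mat2_adj (sigma1 q)) (mu * fst (app M v), mu * snd (app M v))),
       s * snd (app (mat2_adj (sigma1 q)) (mu * fst (app M v), mu * snd (app M v))))" .
  also have "app (mat2_adj (sigma1 q)) (mu * fst (app M v), mu * snd (app M v)) =
     (mu * fst (app (mat2_adj (sigma1 q)) (app M v)), mu * snd (app (mat2_adj (sigma1 q)) (app M v)))"
    by (metis app_scale prod.collapse)
  finally have "rho (app M' v) = rho (app (mat2_adj (sigma1 q)) (app M v))"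
    using s mu(1) by (simp add: rho_def)
  then show ?thesis using rhoA nz by simp
qed

end


lemma neg_expansion:
  assumes "(y::rat) < 0"
  shows "cf_expansion y \<noteq> [] \<and> hd (cf_expansion y) \<le> 0 \<and> (\<forall>e\<in>set (tl (cf_expansion y)). e \<le> -1) \<and>
     even (length (cf_expansion y)) \<and> cf_eval (cf_expansion y) = y"
proof -
  have v: "cf_valid (cf_expansion y)" "cf_eval (cf_expansion y) = y" using cf_exp_valid assms by auto
  have e: "even (length (cf_expansion y))" using v by (simp add: cf_valid_iff)
  have "\<not> posl (cf_expansion y)"
  proof
    assume "posl (cf_expansion y)"
    then have "cf_eval (cf_expansion y) > 0" using posl_pos e by simp
    then show False using v assms by simp
  qed
  then have "posl (map uminus (cf_expansion y))" using v by (auto simp: cf_valid_iff)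
  then have "cf_expansion y \<noteq> [] \<and> hd (cf_expansion y) \<le> 0 \<and> (\<forall>e\<in>set (tl (cf_expansion y)). e \<le> -1)"
    by (cases "cf_expansion y") (auto simp: posl_def)
  then show ?thesis using e v by simp
qed

lemma cf_exp_0: "cf_expansion 0 = [-1, 1]" by (simp add: cf_expansion_def)

context
  fixes q :: real
  assumes q0: "0 < q" and q1: "q < 1"
begin

lemma beta_m11: "beta q [-1, 1] = mat2_mult (sigma1 q) (sigma2 q)"
  by (simp add: mat2_ipow_def)
lemma beta_01: "beta q [0, 1] = sigma2 q"
  by (simp add: mat2_ipow_def)
lemma beta_0m1: "beta q [0, -1] = mat2_adj (sigma2 q)"
  by (simp add: mat2_ipow_def)
lemma app_s1s2: "app (mat2_mult (sigma1 q) (sigma2 q)) (1, 0) = (0, 1)"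
  "app (mat2_mult (sigma1 q) (sigma2 q)) (1, 1 - q) = ((q - 1) / q^2, 1/q)"
  using q0 by (simp_all add: mat2_mult_def sigma1_def sigma2_def app_def field_simps power2_eq_square)
lemma app_s2: "app (sigma2 q) (1, 0) = (1, 1)" "app (sigma2 q) (1, 1 - q) = (1, 1/q)"
  using q0 by (simp_all add: sigma2_def app_def field_simps)
lemma app_as2: "app (mat2_adj (sigma2 q)) (1, 0) = (1/q, -1)" "app (mat2_adj (sigma2 q)) (1, 1 - q) = (1/q, -q)"
  using q0 by (simp_all add: sigma2_def mat2_adj_def app_def field_simps)

lemma den_nonzero:
  assumes v: "v = (1, 0) \<or> v = (1, 1 - q)"
  shows "snd (app (beta q (cf_expansion y)) v) \<noteq> 0"
proof -
  consider "y > 0" | "y = 0" | "y < 0" by fastforce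
  then show ?thesis
  proof cases
    case 1
    have L: "posl (cf_expansion y)" "even (length (cf_expansion y))" using pos_expansion[OF 1] by auto
    have ne: "cf_expansion y \<noteq> []" using L by (simp add: posl_def)
    have ent: "\<forall>e\<in>set (cf_expansion y). e \<ge> 0" "last (cf_expansion y) \<ge> 1"
    proof -
      obtain c T where cT: "cf_expansion y = c # T" using ne by (cases "cf_expansion y") auto
      have "T \<noteq> []" using L(2) cT by auto
      then show "\<forall>e\<in>set (cf_expansion y). e \<ge> 0" "last (cf_expansion y) \<ge> 1" using L(1) cT by (auto simp: posl_def)
    qed
    have "I0 v" using v q1 by (auto simp: I0_def)
    then have "Ip (app (beta q (cf_expansion y)) v)" using beta_I0_Ip[OF q0 L(2) ne ent] by blast
    then show ?thesis by (simp add: Ip_def)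
  next
    case 2
    show ?thesis using 2 v q0 q1 by (auto simp: cf_exp_0 beta_m11 app_s1s2 simp del: beta.simps)
  next
    case 3
    from neg_expansion[OF 3] have L: "cf_expansion y \<noteq> []" "hd (cf_expansion y) \<le> 0"
      "\<forall>e\<in>set (tl (cf_expansion y)). e \<le> -1" "even (length (cf_expansion y))" by auto
    have "I1 v" using v q0 by (auto simp: I1_def)
    then have "In (app (beta q (cf_expansion y)) v)" using beta_neg_vec[OF q0 L(4,1,2,3)] by blast
    then show ?thesis by (simp add: In_def)
  qed
qed

end


context
  fixes q :: real
  assumes q0: "0 < q" and q1: "q < 1"
begin

lemma case_pos:
  assumes y: "(y::rat) > 0"
  shows "beta q (cf_expansion (y + 1)) = mat2_mult (mat2_adj (sigma1 q)) (beta q (cf_expansion y))"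
proof -
  define L where "L = cf_expansion y"
  have L: "posl L" "even (length L)" "cf_eval L = y" using pos_expansion[OF y] by (auto simp: L_def)
  obtain a b rest where abr: "L = a # b # rest" using L
    by (cases L rule: remdups_adj.cases) (auto simp: posl_def)
  have a: "a \<ge> 0" using L(1) abr by (simp add: posl_def)
  define L' where "L' = (a + 1) # b # rest"
  have v': "cf_valid L'" using L abr a by (auto simp: L'_def cf_valid_iff posl_def)
  have "cf_eval L' = cf_eval L + 1" by (simp add: L'_def abr cf_eval_cons del: cf_eval.simps)
  then have "cf_expansion (y + 1) = L'" using cf_exp_eq[OF v'] L(3) by simp
  moreover have "mat2_ipow (sigma1 q) (- (a + 1)) = mat2_mult (mat2_adj (sigma1 q)) (mat2_ipow (sigma1 q) (- a))"
  proof -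
    have "nat (a + 1) = Suc (nat a)" using a by simp
    then show ?thesis using a ipow_neg[of "a + 1" "sigma1 q"] ipow_neg[of a "sigma1 q"] by simp
  qed
  ultimately show ?thesis by (simp add: L'_def L_def[symmetric] abr mult_assoc)
qed

lemma case_neg1:
  assumes y: "(y::rat) < 0" and abr: "cf_expansion y = a # b # rest" and a: "a \<le> -1"
  shows "beta q (cf_expansion (y + 1)) = smult2 q (mat2_mult (mat2_adj (sigma1 q)) (beta q (cf_expansion y)))"
proof -
  define L where "L = cf_expansion y"
  have L: "L \<noteq> []" "hd L \<le> 0" "\<forall>e\<in>set (tl L). e \<le> -1" "even (length L)" "cf_eval L = y"
    using neg_expansion[OF y] by (auto simp: L_def)
  define L' where "L' = (a + 1) # b # rest"
  have "posl (map uminus L')" using L abr a by (auto simp: L'_def L_def posl_def)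
  then have v': "cf_valid L'" using L abr by (simp add: L'_def cf_valid_iff L_def)
  have "cf_eval L' = cf_eval L + 1" by (simp add: L'_def L_def abr cf_eval_cons del: cf_eval.simps)
  then have "cf_expansion (y + 1) = L'" using cf_exp_eq[OF v'] L(5) by simp
  moreover have "mat2_mult (mat2_adj (sigma1 q)) (mat2_ipow (sigma1 q) (- a)) = smult2 (1/q) (mat2_ipow (sigma1 q) (- (a + 1)))"
  proof -
    have n: "nat (- a) = Suc (nat (- a - 1))" using a by simp
    have "mat2_mult (mat2_adj (sigma1 q)) (mat2_ipow (sigma1 q) (- a)) =
        mat2_mult (mat2_mult (mat2_adj (sigma1 q)) (sigma1 q)) (mat2_npow (sigma1 q) (nat (- a - 1)))"
      using a by (simp add: ipow_nonneg n mult_assoc)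
    also have "\<dots> = smult2 (1/q) (mat2_npow (sigma1 q) (nat (- a - 1)))"
      by (simp add: adj_mult det_s1[OF q0] mult_smult_left)
    also have "mat2_npow (sigma1 q) (nat (- a - 1)) = mat2_ipow (sigma1 q) (- (a + 1))"
      using a by (simp add: ipow_nonneg)
    finally show ?thesis .
  qed
  ultimately show ?thesis using q0
    by (simp add: L'_def abr mult_assoc[symmetric] mult_smult_left smult2_smult2)
qed

end


lemma case_hard:
  fixes q :: real
  assumes q0: "0 < q"
  assumes y: "(y::rat) < 0" and abr: "cf_expansion y = 0 # b # rest" and nb: "\<not> (b = -1 \<and> rest = [])"
  shows "\<exists>s. s \<noteq> 0 \<and> beta q (cf_expansion (y + 1)) =
     smult2 s (mat2_mult (mat2_adj (sigma1 q)) (mat2_mult (beta q (cf_expansion y)) (mat2_adj (sigma1 q))))"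
proof -
  define L where "L = cf_expansion y"
  have L: "L \<noteq> []" "hd L \<le> 0" "\<forall>e\<in>set (tl L). e \<le> -1" "even (length L)" "cf_eval L = y"
    using neg_expansion[OF y] by (auto simp: L_def)
  define C where "C = map uminus (b # rest)"
  have Cge: "\<forall>e\<in>set C. e \<ge> 1" using L(3) abr by (auto simp: C_def L_def)
  have Codd: "odd (length C)" using L(4) abr by (simp add: C_def L_def)
  have LC: "L = 0 # map uminus C" using abr by (simp add: C_def L_def comp_def)
  define C' where "C' = dec_last (dec_first C)"
  have C'ge: "\<forall>e\<in>set C'. e \<ge> 0"
  proof -
    obtain c l where cl: "C = c # l" using Codd by (cases C) auto
    have c1: "c \<ge> 1" "\<forall>e\<in>set l. e \<ge> 1" using Cge cl by auto
    show ?thesis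
    proof (cases "l = []")
      case True
      then have "rest = []" using cl by (simp add: C_def)
      then have "b \<noteq> -1" using nb by simp
      then have "c \<ge> 2" using cl c1 True by (simp add: C_def)
      then show ?thesis using True by (simp add: C'_def cl dec_last_def)
    next
      case False
      have "\<forall>e\<in>set (butlast l). e \<ge> 1" using c1 by (meson in_set_butlastD)
      moreover have "last l \<in> set l" using False by (rule last_in_set)
      then have "last l \<ge> 1" using c1 by blast
      then have "last l > 0" by simp
      ultimately show ?thesis using False c1 by (auto simp: C'_def cl dec_last_def)
    qed
  qed
  have C'odd: "odd (length C')" using Codd by (cases C) (auto simp: C'_def)
  define L' where "L' = [0, 1] @ C' @ [1]"
  have L'p: "even (length L')" "L' \<noteq> []" "\<forall>e\<in>set L'. e \<ge> 0" "last L' \<ge> 1"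
    using C'odd C'ge by (auto simp: L'_def)
  obtain s where s: "s \<noteq> 0" "beta q L' = smult2 s (mat2_mult (mat2_adj (sigma1 q)) (mat2_mult (beta q L) (mat2_adj (sigma1 q))))"
    using hard_matrix[OF q0 Codd] by (auto simp: L'_def C'_def LC)
  obtain s1 where s1: "s1 \<noteq> 0" "beta 1 L' = smult2 s1 (mat2_mult (mat2_adj (sigma1 1)) (mat2_mult (beta 1 L) (mat2_adj (sigma1 1))))"
    using hard_matrix[of 1 C] Codd by (auto simp: L'_def C'_def LC)
  have negL: "fst (app (beta 1 L) (1,0)) > 0 \<and> snd (app (beta 1 L) (1,0)) < 0 \<and>
      real_of_rat (cf_eval L) = rho (app (beta 1 L) (1,0))"
    using cf_beta1_neg[OF L(4,1,2,3)] .
  have "real_of_rat (cf_eval L') = rho (app (beta 1 L') (1,0))"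
    using cf_beta1_pos[OF L'p] by simp
  also have "\<dots> = 1 * rho (app (beta 1 L) (1,0)) + 1"
    by (rule transfer_rho[of 1 s1 "mat2_adj (sigma1 1)"]) (use s1 negL in auto)
  also have "\<dots> = real_of_rat (y + 1)" using negL L(5) by (simp add: of_rat_add)
  finally have cL': "cf_eval L' = y + 1" by (simp only: of_rat_eq_iff)
  have np: "nrm L' \<noteq> [] \<and> (\<forall>e\<in>set (nrm L'). e \<ge> 0) \<and> (\<forall>e\<in>set (tl (nrm L')). e \<ge> 1) \<and>
     (even (length (nrm L')) = even (length L')) \<and> hd (nrm L') \<ge> hd L'"
    using nrm_props[OF L'p(2,3,4)] .
  have "posl (nrm L')" using np by (simp add: posl_def)
  then have vn: "cf_valid (nrm L')" using np L'p(1) by (simp add: cf_valid_iff)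
  have "cf_expansion (y + 1) = nrm L'" using cf_exp_eq[OF vn] cL' by (simp add: cf_eval_nrm)
  moreover have "beta q (nrm L') = beta q L'" using beta_nrm[OF L'p(3,1)] np L'p(1) by simp
  ultimately show ?thesis using s by (intro exI[of _ s]) (simp add: L_def)
qed


lemma cf_exp_1: "cf_expansion 1 = [0, 1]"
proof -
  have "cf_valid [0, 1]" by (simp add: cf_valid_def)
  from cf_exp_eq[OF this] show ?thesis by simp
qed

context
  fixes q :: real
  assumes q0: "0 < q" and q1: "q < 1"
begin

lemma transl_vec:
  assumes v: "v = (1, 0) \<or> v = (1, 1 - q)"
  shows "rho (app (beta q (cf_expansion (y + 1))) v) = q * rho (app (beta q (cf_expansion y)) v) + 1"
proof -
  have nz: "snd (app (beta q (cf_expansion y)) v) \<noteq> 0" using den_nonzero[OF q0 q1 v] .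
  consider "y > 0" | "y = 0" | "y < 0" by fastforce
  then show ?thesis
  proof cases
    case 1
    show ?thesis
      by (rule transfer_rho[OF q0, of 1 mat2_id]) (use case_pos[OF q0 q1 1] v nz in auto)
  next
    case 2
    show ?thesis using v q0 q1 2
      by (auto simp: cf_exp_1 cf_exp_0 beta_01[OF q0] beta_m11[OF q0] app_s1s2[OF q0] app_s2[OF q0] rho_def field_simps
          power2_eq_square simp del: beta.simps)
  next
    case 3
    from neg_expansion[OF 3] have L: "cf_expansion y \<noteq> []" "hd (cf_expansion y) \<le> 0"
      "\<forall>e\<in>set (tl (cf_expansion y)). e \<le> -1" "even (length (cf_expansion y))" "cf_eval (cf_expansion y) = y"
      by auto
    obtain a b rest where abr: "cf_expansion y = a # b # rest" using L(1,4)
      by (cases "cf_expansion y" rule: remdups_adj.cases) auto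
    have a0: "a \<le> 0" using L(2) abr by simp
    show ?thesis
    proof (cases "a \<le> -1")
      case True
      show ?thesis
        by (rule transfer_rho[OF q0, of q mat2_id]) (use case_neg1[OF q0 q1 3 abr True] q0 v nz in auto)
    next
      case False
      then have a00: "a = 0" using a0 by simp
      show ?thesis
      proof (cases "b = -1 \<and> rest = []")
        case True
        have "y = -1" using L(5) abr a00 True by simp
        moreover have e: "cf_expansion (-1) = [0, -1]"
          using abr a00 True \<open>y = -1\<close> by auto
        ultimately show ?thesis using v q0 q1
          by (auto simp: e cf_exp_0 beta_0m1[OF q0] beta_m11[OF q0] app_s1s2[OF q0] app_as2[OF q0] rho_def field_simps
              power2_eq_square simp del: beta.simps)
      next
        case False
        obtain s where s: "s \<noteq> 0" "beta q (cf_expansion (y + 1)) =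
           smult2 s (mat2_mult (mat2_adj (sigma1 q)) (mat2_mult (beta q (cf_expansion y)) (mat2_adj (sigma1 q))))"
          using case_hard[OF q0 3 abr[unfolded a00] False] by blast
        show ?thesis
          by (rule transfer_rho[OF q0 s(1), of "mat2_adj (sigma1 q)"]) (use s v nz in auto)
      qed
    qed
  qed
qed

lemma transl: "qrat_sharp q (y + 1) = q * qrat_sharp q y + 1 \<and> qrat_flat q (y + 1) = q * qrat_flat q y + 1"
  using transl_vec[of "(1,0)" y] transl_vec[of "(1, 1 - q)" y]
  by (simp add: qrat_sharp_def qrat_flat_def act_app)

lemma transl_n: "\<exists>c. \<forall>y. qrat_sharp q (y + of_nat n) = q^n * qrat_sharp q y + c \<and>
    qrat_flat q (y + of_nat n) = q^n * qrat_flat q y + c"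
proof (induction n)
  case 0 then show ?case by (intro exI[of _ 0]) simp
next
  case (Suc n)
  then obtain c where c: "\<forall>y. qrat_sharp q (y + of_nat n) = q^n * qrat_sharp q y + c \<and>
    qrat_flat q (y + of_nat n) = q^n * qrat_flat q y + c" by blast
  have "qrat_sharp q (y + of_nat (Suc n)) = q^(Suc n) * qrat_sharp q y + (q * c + 1) \<and>
      qrat_flat q (y + of_nat (Suc n)) = q^(Suc n) * qrat_flat q y + (q * c + 1)" for y
  proof -
    have "y + of_nat (Suc n) = (y + of_nat n) + 1" by simp
    then show ?thesis using transl[of "y + of_nat n"] c by (simp add: algebra_simps)
  qed
  then show ?case by blast
qed

end


context
  fixes q :: real
  assumes q0: "0 < q" and q1: "q < 1"
begin

lemma shift_exists: "\<exists>n::nat. t + real n > 0"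
proof -
  obtain n :: nat where "real n > -t" using reals_Archimedean2 by blast
  then show ?thesis by (intro exI[of _ n]) linarith
qed

lemma right_all:
  fixes r :: rat assumes e: "e > 0"
  shows "\<exists>\<delta>>0. \<forall>y::rat. r < y \<and> real_of_rat y < real_of_rat r + \<delta> \<longrightarrow> \<bar>qrat_sharp q y - qrat_sharp q r\<bar> < e"
proof -
  obtain n :: nat where n: "real_of_rat r + real n > 0" using shift_exists by blast
  have rn: "r + of_nat n > 0"
  proof -
    have "real_of_rat (r + of_nat n) > 0" using n by (simp add: of_rat_add)
    then show ?thesis by (simp add: zero_less_of_rat_iff)
  qed
  obtain c where c: "\<forall>y. qrat_sharp q (y + of_nat n) = q^n * qrat_sharp q y + c"
    using transl_n[OF q0 q1, of n] by blast
  have qn: "q^n > 0" using q0 by simp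
  obtain \<delta> where d: "\<delta> > 0" "\<forall>y::rat. r + of_nat n < y \<and> real_of_rat y < real_of_rat (r + of_nat n) + \<delta> \<longrightarrow>
        \<bar>qrat_sharp q y - qrat_sharp q (r + of_nat n)\<bar> < e * q^n"
    using pos_right[OF q0 q1 rn, of "e * q^n"] e qn by auto
  show ?thesis
  proof (intro exI[of _ \<delta>] conjI allI impI)
    show "\<delta> > 0" by (rule d(1))
    fix y :: rat assume y: "r < y \<and> real_of_rat y < real_of_rat r + \<delta>"
    have "r + of_nat n < y + of_nat n" using y by simp
    moreover have "real_of_rat (y + of_nat n) < real_of_rat (r + of_nat n) + \<delta>" using y by (simp add: of_rat_add)
    ultimately have "\<bar>qrat_sharp q (y + of_nat n) - qrat_sharp q (r + of_nat n)\<bar> < e * q^n" using d(2) by blast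
    then have "\<bar>q^n * (qrat_sharp q y - qrat_sharp q r)\<bar> < e * q^n" using c by (simp add: algebra_simps)
    then have "q^n * \<bar>qrat_sharp q y - qrat_sharp q r\<bar> < e * q^n" using qn by (simp add: abs_mult)
    then show "\<bar>qrat_sharp q y - qrat_sharp q r\<bar> < e" using qn by (simp add: mult.commute)
  qed
qed

lemma left_all:
  fixes r :: rat assumes e: "e > 0"
  shows "\<exists>\<delta>>0. \<forall>y::rat. real_of_rat r - \<delta> < real_of_rat y \<and> y < r \<longrightarrow> \<bar>qrat_sharp q y - qrat_flat q r\<bar> < e"
proof -
  obtain n :: nat where n: "real_of_rat r + real n > 0" using shift_exists by blast
  have rn: "r + of_nat n > 0"
  proof -
    have "real_of_rat (r + of_nat n) > 0" using n by (simp add: of_rat_add)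
    then show ?thesis by (simp add: zero_less_of_rat_iff)
  qed
  obtain c where c: "\<forall>y. qrat_sharp q (y + of_nat n) = q^n * qrat_sharp q y + c \<and>
      qrat_flat q (y + of_nat n) = q^n * qrat_flat q y + c"
    using transl_n[OF q0 q1, of n] by blast
  have qn: "q^n > 0" using q0 by simp
  obtain \<delta> where d: "\<delta> > 0" "\<forall>y::rat. real_of_rat (r + of_nat n) - \<delta> < real_of_rat y \<and> y < r + of_nat n \<longrightarrow>
        \<bar>qrat_sharp q y - qrat_flat q (r + of_nat n)\<bar> < e * q^n"
    using pos_left[OF q0 q1 rn, of "e * q^n"] e qn by auto
  show ?thesis
  proof (intro exI[of _ \<delta>] conjI allI impI)
    show "\<delta> > 0" by (rule d(1))
    fix y :: rat assume y: "real_of_rat r - \<delta> < real_of_rat y \<and> y < r"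
    have "y + of_nat n < r + of_nat n" using y by simp
    moreover have "real_of_rat (r + of_nat n) - \<delta> < real_of_rat (y + of_nat n)" using y by (simp add: of_rat_add)
    ultimately have "\<bar>qrat_sharp q (y + of_nat n) - qrat_flat q (r + of_nat n)\<bar> < e * q^n" using d(2) by blast
    then have "\<bar>q^n * (qrat_sharp q y - qrat_flat q r)\<bar> < e * q^n" using c by (simp add: algebra_simps)
    then have "q^n * \<bar>qrat_sharp q y - qrat_flat q r\<bar> < e * q^n" using qn by (simp add: abs_mult)
    then show "\<bar>qrat_sharp q y - qrat_flat q r\<bar> < e" using qn by (simp add: mult.commute)
  qed
qed

lemma irr_all:
  fixes t :: real assumes ti: "t \<notin> \<rat>" and e: "e > 0"
  shows "\<exists>\<delta>>0. \<forall>y y'::rat. \<bar>real_of_rat y - t\<bar> < \<delta> \<and> \<bar>real_of_rat y' - t\<bar> < \<delta> \<longrightarrow>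
           \<bar>qrat_sharp q y - qrat_sharp q y'\<bar> < e"
proof -
  obtain n :: nat where n: "t + real n > 0" using shift_exists by blast
  have tni: "t + real n \<notin> \<rat>"
  proof
    assume "t + real n \<in> \<rat>"
    then have "t + real n - real n \<in> \<rat>" by (intro Rats_diff) auto
    then show False using ti by simp
  qed
  obtain c where c: "\<forall>y. qrat_sharp q (y + of_nat n) = q^n * qrat_sharp q y + c"
    using transl_n[OF q0 q1, of n] by blast
  have qn: "q^n > 0" using q0 by simp
  obtain \<delta> where d: "\<delta> > 0" "\<forall>y y'::rat. \<bar>real_of_rat y - (t + real n)\<bar> < \<delta> \<and> \<bar>real_of_rat y' - (t + real n)\<bar> < \<delta> \<longrightarrow>
           \<bar>qrat_sharp q y - qrat_sharp q y'\<bar> < e * q^n"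
    using irr_cauchy[OF q0 q1 n tni, of "e * q^n"] e qn by auto
  show ?thesis
  proof (intro exI[of _ \<delta>] conjI allI impI)
    show "\<delta> > 0" by (rule d(1))
    fix y y' :: rat assume y: "\<bar>real_of_rat y - t\<bar> < \<delta> \<and> \<bar>real_of_rat y' - t\<bar> < \<delta>"
    have "\<bar>real_of_rat (y + of_nat n) - (t + real n)\<bar> < \<delta>" "\<bar>real_of_rat (y' + of_nat n) - (t + real n)\<bar> < \<delta>"
      using y by (simp_all add: of_rat_add)
    then have "\<bar>qrat_sharp q (y + of_nat n) - qrat_sharp q (y' + of_nat n)\<bar> < e * q^n" using d(2) by blast
    then have "\<bar>q^n * (qrat_sharp q y - qrat_sharp q y')\<bar> < e * q^n" using c by (simp add: algebra_simps)
    then have "q^n * \<bar>qrat_sharp q y - qrat_sharp q y'\<bar> < e * q^n" using qn by (simp add: abs_mult)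
    then show "\<bar>qrat_sharp q y - qrat_sharp q y'\<bar> < e" using qn by (simp add: mult.commute)
  qed
qed

end


theorem theorem2p11:
  fixes q :: real
  assumes "0 < q" and "q < 1"
  shows
    "(\<forall>t::real. t \<notin> \<rat> \<longrightarrow>
        (\<exists>L::real. \<forall>x::nat \<Rightarrow> rat.
            (\<lambda>m. real_of_rat (x m)) \<longlonglongrightarrow> t \<longrightarrow>
            (\<lambda>m. qrat_sharp q (x m)) \<longlonglongrightarrow> L))
   \<and> (\<forall>(r::rat) (x::nat \<Rightarrow> rat).
        (\<lambda>m. real_of_rat (x m)) \<longlonglongrightarrow> real_of_rat r \<longrightarrow> (\<forall>m. x m > r) \<longrightarrow>
        (\<lambda>m. qrat_sharp q (x m)) \<longlonglongrightarrow> qrat_sharp q r)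
   \<and> (\<forall>(r::rat) (x::nat \<Rightarrow> rat).
        (\<lambda>m. real_of_rat (x m)) \<longlonglongrightarrow> real_of_rat r \<longrightarrow> (\<forall>m. x m < r) \<longrightarrow>
        (\<lambda>m. qrat_sharp q (x m)) \<longlonglongrightarrow> qrat_flat q r)"
proof (intro conjI allI impI)
  note q0 = assms(1) and q1 = assms(2)
  show "(\<lambda>m. qrat_sharp q (x m)) \<longlonglongrightarrow> qrat_sharp q r"
    if conv: "(\<lambda>m. real_of_rat (x m)) \<longlonglongrightarrow> real_of_rat r" and gt: "\<forall>m. x m > r" for r x
  proof (rule LIMSEQ_I)
    fix e :: real assume e: "e > 0"
    obtain \<delta> where d: "\<delta> > 0" "\<forall>y::rat. r < y \<and> real_of_rat y < real_of_rat r + \<delta> \<longrightarrow> \<bar>qrat_sharp q y - qrat_sharp q r\<bar> < e"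
      using right_all[OF q0 q1 e, of r] by blast
    obtain N where N: "\<forall>m\<ge>N. norm (real_of_rat (x m) - real_of_rat r) < \<delta>" using LIMSEQ_D[OF conv d(1)] by blast
    show "\<exists>N. \<forall>m\<ge>N. norm (qrat_sharp q (x m) - qrat_sharp q r) < e"
    proof (intro exI[of _ N] allI impI)
      fix m assume "m \<ge> N"
      then have "real_of_rat (x m) < real_of_rat r + \<delta>" using N by auto
      then show "norm (qrat_sharp q (x m) - qrat_sharp q r) < e" using d(2) gt by auto
    qed
  qed
  show "(\<lambda>m. qrat_sharp q (x m)) \<longlonglongrightarrow> qrat_flat q r"
    if conv: "(\<lambda>m. real_of_rat (x m)) \<longlonglongrightarrow> real_of_rat r" and lt: "\<forall>m. x m < r" for r x
  proof (rule LIMSEQ_I)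
    fix e :: real assume e: "e > 0"
    obtain \<delta> where d: "\<delta> > 0" "\<forall>y::rat. real_of_rat r - \<delta> < real_of_rat y \<and> y < r \<longrightarrow> \<bar>qrat_sharp q y - qrat_flat q r\<bar> < e"
      using left_all[OF q0 q1 e, of r] by blast
    obtain N where N: "\<forall>m\<ge>N. norm (real_of_rat (x m) - real_of_rat r) < \<delta>" using LIMSEQ_D[OF conv d(1)] by blast
    show "\<exists>N. \<forall>m\<ge>N. norm (qrat_sharp q (x m) - qrat_flat q r) < e"
    proof (intro exI[of _ N] allI impI)
      fix m assume "m \<ge> N"
      then have "real_of_rat r - \<delta> < real_of_rat (x m)" using N by auto
      then show "norm (qrat_sharp q (x m) - qrat_flat q r) < e" using d(2) lt by auto
    qed
  qed
  show "\<exists>L::real. \<forall>x::nat \<Rightarrow> rat. (\<lambda>m. real_of_rat (x m)) \<longlonglongrightarrow> t \<longrightarrow> (\<lambda>m. qrat_sharp q (x m)) \<longlonglongrightarrow> L"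
    if ti: "t \<notin> \<rat>" for t
  proof -
    have diff0: "(\<lambda>m. qrat_sharp q (x m) - qrat_sharp q (z m)) \<longlonglongrightarrow> 0"
      if cx: "(\<lambda>m. real_of_rat (x m)) \<longlonglongrightarrow> t" and cz: "(\<lambda>m. real_of_rat (z m)) \<longlonglongrightarrow> t" for x z :: "nat \<Rightarrow> rat"
    proof (rule LIMSEQ_I)
      fix e :: real assume e: "e > 0"
      obtain \<delta> where d: "\<delta> > 0" "\<forall>y y'::rat. \<bar>real_of_rat y - t\<bar> < \<delta> \<and> \<bar>real_of_rat y' - t\<bar> < \<delta> \<longrightarrow>
           \<bar>qrat_sharp q y - qrat_sharp q y'\<bar> < e"
        using irr_all[OF q0 q1 ti e] by blast
      obtain N1 where N1: "\<forall>m\<ge>N1. norm (real_of_rat (x m) - t) < \<delta>" using LIMSEQ_D[OF cx d(1)] by blast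
      obtain N2 where N2: "\<forall>m\<ge>N2. norm (real_of_rat (z m) - t) < \<delta>" using LIMSEQ_D[OF cz d(1)] by blast
      show "\<exists>N. \<forall>m\<ge>N. norm (qrat_sharp q (x m) - qrat_sharp q (z m) - 0) < e"
        using N1 N2 d(2) by (intro exI[of _ "max N1 N2"]) auto
    qed
    have cauchy: "convergent (\<lambda>m. qrat_sharp q (x m))"
      if cx: "(\<lambda>m. real_of_rat (x m)) \<longlonglongrightarrow> t" for x :: "nat \<Rightarrow> rat"
    proof -
      have "Cauchy (\<lambda>m. qrat_sharp q (x m))"
      proof (rule metric_CauchyI)
        fix e :: real assume e: "e > 0"
        obtain \<delta> where d: "\<delta> > 0" "\<forall>y y'::rat. \<bar>real_of_rat y - t\<bar> < \<delta> \<and> \<bar>real_of_rat y' - t\<bar> < \<delta> \<longrightarrow>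
             \<bar>qrat_sharp q y - qrat_sharp q y'\<bar> < e"
          using irr_all[OF q0 q1 ti e] by blast
        obtain N where N: "\<forall>m\<ge>N. norm (real_of_rat (x m) - t) < \<delta>" using LIMSEQ_D[OF cx d(1)] by blast
        show "\<exists>M. \<forall>m\<ge>M. \<forall>n\<ge>M. dist (qrat_sharp q (x m)) (qrat_sharp q (x n)) < e"
          using N d(2) by (intro exI[of _ N]) (auto simp: dist_real_def)
      qed
      then show ?thesis by (simp add: Cauchy_convergent_iff)
    qed
    show ?thesis
    proof (cases "\<exists>x0::nat \<Rightarrow> rat. (\<lambda>m. real_of_rat (x0 m)) \<longlonglongrightarrow> t")
      case False
      then show ?thesis by blast
    next
      case True
      then obtain x0 :: "nat \<Rightarrow> rat" where x0: "(\<lambda>m. real_of_rat (x0 m)) \<longlonglongrightarrow> t" by blast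
      obtain L where L: "(\<lambda>m. qrat_sharp q (x0 m)) \<longlonglongrightarrow> L" using cauchy[OF x0] by (auto simp: convergent_def)
      show ?thesis
      proof (intro exI[of _ L] allI impI)
        fix x :: "nat \<Rightarrow> rat" assume cx: "(\<lambda>m. real_of_rat (x m)) \<longlonglongrightarrow> t"
        have "(\<lambda>m. (qrat_sharp q (x m) - qrat_sharp q (x0 m)) + qrat_sharp q (x0 m)) \<longlonglongrightarrow> 0 + L"
          by (rule tendsto_add[OF diff0[OF cx x0] L])
        then show "(\<lambda>m. qrat_sharp q (x m)) \<longlonglongrightarrow> L" by simp
      qed
    qed
  qed
qed


end
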